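(* Let $O$ be a complete discrete valuation ring of characteristic $p$ with perfect residue field, fraction field $K$, which is an $\mathbb{F}_q$-algebra, and let $M\in\mathrm{Mod}_{O,\sigma}$. Suppose $a\in A[M]_K:=A[M]\otimes_OK$ satisfies $\delta^+a:=\Delta(a)-a\otimes1-1\otimes a\in A[M]\otimes_OA[M]$ and $[\alpha]a=\alpha a$ for all $\alpha\in\mathbb{F}_q$. Then there is $a'\in A[M]$ such that $\delta^+a=\delta^+a'$ and $a-a'\in M_K:=M\otimes_OK$.
   Context: $\sigma:O\to O$ is the $q$-th power map, $M_\sigma=M\otimes_{O,\sigma}O$. $\mathrm{Mod}_{O,\sigma}$: free $O$-modules $M$ of finite rank with $O$-linear $\Phi:M_\sigma\to M$ such that $\Phi\otimes K$ is an isomorphism. $A[M]=\mathrm{Sym}_OM/(\Phi(m\otimes1)-m^{\otimes q}:m\in M)$, a Hopf algebra with comultiplication $\Delta m=m\otimes1+1\otimes m$ and $\mathbb{F}_q$-action by algebra endomorphisms $[\alpha]m=\alpha m$ for $m\in M$; $M$ is identified with its image in $A[M]$. *)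

theory Defs
  imports Main "HOL-Library.Poly_Mapping" "HOL-Computational_Algebra.Primes"
begin

text \<open>A discrete valuation v on the field K (values of v at 0 are irrelevant).\<close>
definition discrete_valuation :: "('k::field \<Rightarrow> int) \<Rightarrow> bool" where
  "discrete_valuation v \<longleftrightarrow>
     (\<forall>x y. x \<noteq> 0 \<longrightarrow> y \<noteq> 0 \<longrightarrow> v (x * y) = v x + v y) \<and>
     (\<forall>x y. x \<noteq> 0 \<longrightarrow> y \<noteq> 0 \<longrightarrow> x + y \<noteq> 0 \<longrightarrow> min (v x) (v y) \<le> v (x + y)) \<and>
     (\<exists>\<pi>. \<pi> \<noteq> 0 \<and> v \<pi> = 1)"

definition vball :: "('k::field \<Rightarrow> int) \<Rightarrow> int \<Rightarrow> 'k set" where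
  "vball v N = {x. x = 0 \<or> N \<le> v x}"

definition val_ring :: "('k::field \<Rightarrow> int) \<Rightarrow> 'k set" where
  "val_ring v = vball v 0"

definition max_ideal :: "('k::field \<Rightarrow> int) \<Rightarrow> 'k set" where
  "max_ideal v = vball v 1"

definition val_complete :: "('k::field \<Rightarrow> int) \<Rightarrow> bool" where
  "val_complete v \<longleftrightarrow>
     (\<forall>s :: nat \<Rightarrow> 'k.
        (\<forall>s_i \<in> range s. s_i \<in> val_ring v) \<longrightarrow>
        (\<forall>N. \<exists>m. \<forall>i\<ge>m. \<forall>j\<ge>m. s i - s j \<in> vball v N) \<longrightarrow>
        (\<exists>L \<in> val_ring v. \<forall>N. \<exists>m. \<forall>i\<ge>m. s i - L \<in> vball v N))"

definition perfect_residue_field :: "nat \<Rightarrow> ('k::field \<Rightarrow> int) \<Rightarrow> bool" where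
  "perfect_residue_field p v \<longleftrightarrow>
     (\<forall>x \<in> val_ring v. \<exists>y \<in> val_ring v. x - y ^ p \<in> max_ideal v)"

definition Fq :: "nat \<Rightarrow> 'k::field set" where
  "Fq q = {x. x ^ q = x}"

type_synonym 'k mpoly = "(nat \<Rightarrow>\<^sub>0 nat) \<Rightarrow>\<^sub>0 'k"

definition Const :: "'k::comm_ring_1 \<Rightarrow> 'k mpoly" where
  "Const c = Poly_Mapping.single 0 c"

definition Var :: "nat \<Rightarrow> 'k::comm_ring_1 mpoly" where
  "Var i = Poly_Mapping.single (Poly_Mapping.single i 1) 1"

definition subst :: "(nat \<Rightarrow> 'k::comm_ring_1 mpoly) \<Rightarrow> 'k mpoly \<Rightarrow> 'k mpoly" where
  "subst \<sigma> p = (\<Sum>mon\<in>Poly_Mapping.keys p. Const (Poly_Mapping.lookup p mon) *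
                  (\<Prod>i\<in>Poly_Mapping.keys (mon :: nat \<Rightarrow>\<^sub>0 nat). \<sigma> i ^ Poly_Mapping.lookup mon i))"

definition vars_in :: "nat set \<Rightarrow> 'k::zero mpoly \<Rightarrow> bool" where
  "vars_in S p \<longleftrightarrow> (\<forall>m\<in>Poly_Mapping.keys p. Poly_Mapping.keys m \<subseteq> S)"

definition coeffs_in :: "'k set \<Rightarrow> 'k::zero mpoly \<Rightarrow> bool" where
  "coeffs_in R p \<longleftrightarrow> (\<forall>m. Poly_Mapping.lookup p m \<in> R)"

definition ideal_gen :: "nat set \<Rightarrow> 'k::comm_ring_1 mpoly set \<Rightarrow> 'k mpoly set" where
  "ideal_gen S G = {p. \<exists>F h. finite F \<and> F \<subseteq> G \<and> (\<forall>g\<in>F. vars_in S (h g)) \<and>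
                          p = (\<Sum>g\<in>F. h g * g)}"

section \<open>The algebra A[M] for M = O^n with basis e_0..e_(n-1) and Phi(e_j \<otimes> 1) = \<Sum>_i C i j e_i\<close>

text \<open>The element m = \<Sum>_j a_j e_j of M, placed on the variables off+0 .. off+n-1.\<close>
definition elemM :: "nat \<Rightarrow> nat \<Rightarrow> (nat \<Rightarrow> 'k::comm_ring_1) \<Rightarrow> 'k mpoly" where
  "elemM n off a = (\<Sum>j<n. Const (a j) * Var (off + j))"

text \<open>Phi(m \<otimes> 1) for m = \<Sum>_j a_j e_j, i.e. \<Sum>_j a_j^q Phi(e_j \<otimes> 1).\<close>
definition PhiM :: "nat \<Rightarrow> nat \<Rightarrow> (nat \<Rightarrow> nat \<Rightarrow> 'k::comm_ring_1) \<Rightarrow> nat \<Rightarrow> (nat \<Rightarrow> 'k) \<Rightarrow> 'k mpoly" where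
  "PhiM q n C off a = (\<Sum>j<n. Const (a j ^ q) * elemM n off (\<lambda>i. C i j))"

text \<open>Defining relations Phi(m \<otimes> 1) - m^q, m \<in> M, on the variables off .. off+n-1.\<close>
definition rels :: "nat \<Rightarrow> nat \<Rightarrow> ('k::field \<Rightarrow> int) \<Rightarrow> (nat \<Rightarrow> nat \<Rightarrow> 'k) \<Rightarrow> nat \<Rightarrow> 'k mpoly set" where
  "rels q n v C off = {PhiM q n C off a - elemM n off a ^ q | a. \<forall>j. a j \<in> val_ring v}"

text \<open>Kernel of K[x_0..x_(n-1)] \<rightarrow> A[M]_K = A[M] \<otimes>_O K.\<close>
definition idealA :: "nat \<Rightarrow> nat \<Rightarrow> ('k::field \<Rightarrow> int) \<Rightarrow> (nat \<Rightarrow> nat \<Rightarrow> 'k) \<Rightarrow> 'k mpoly set" where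
  "idealA q n v C = ideal_gen {..<n} (rels q n v C 0)"

text \<open>Kernel of K[x_0..x_(2n-1)] \<rightarrow> A[M]_K \<otimes>_K A[M]_K (first factor on x_0..x_(n-1),
  second factor on x_n..x_(2n-1)).\<close>
definition idealAA :: "nat \<Rightarrow> nat \<Rightarrow> ('k::field \<Rightarrow> int) \<Rightarrow> (nat \<Rightarrow> nat \<Rightarrow> 'k) \<Rightarrow> 'k mpoly set" where
  "idealAA q n v C = ideal_gen {..<2*n} (rels q n v C 0 \<union> rels q n v C n)"

text \<open>Comultiplication and the maps a \<mapsto> a \<otimes> 1, a \<mapsto> 1 \<otimes> a on representatives.\<close>
definition Delta :: "nat \<Rightarrow> 'k::comm_ring_1 mpoly \<Rightarrow> 'k mpoly" where
  "Delta n a = subst (\<lambda>i. if i < n then Var i + Var (n + i) else Var i) a"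

definition one_tensor :: "nat \<Rightarrow> 'k::comm_ring_1 mpoly \<Rightarrow> 'k mpoly" where
  "one_tensor n a = subst (\<lambda>i. Var (n + i)) a"

definition delta_plus :: "nat \<Rightarrow> 'k::comm_ring_1 mpoly \<Rightarrow> 'k mpoly" where
  "delta_plus n a = Delta n a - a - one_tensor n a"

definition scal_act :: "'k::comm_ring_1 \<Rightarrow> 'k mpoly \<Rightarrow> 'k mpoly" where
  "scal_act \<alpha> a = subst (\<lambda>i. Const \<alpha> * Var i) a"

definition Phi_K_iso :: "nat \<Rightarrow> (nat \<Rightarrow> nat \<Rightarrow> 'k::field) \<Rightarrow> bool" where
  "Phi_K_iso n C \<longleftrightarrow>
     bij_betw (\<lambda>b i. if i < n then (\<Sum>j<n. C i j * b j) else 0)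
              {b. \<forall>j\<ge>n. b j = 0} {b. \<forall>j\<ge>n. b j = 0}"

end

theory Submission
  imports Defs "HOL-Computational_Algebra.Polynomial" "HOL-Computational_Algebra.Primes"
begin

abbreviation lk :: "('a \<Rightarrow>\<^sub>0 'b::zero) \<Rightarrow> 'a \<Rightarrow> 'b" where "lk \<equiv> Poly_Mapping.lookup"
abbreviation ks :: "('a \<Rightarrow>\<^sub>0 'b::zero) \<Rightarrow> 'a set" where "ks \<equiv> Poly_Mapping.keys"

lemma lookup_Const_mult: "lk (Const c * P) m = c * lk P m"
proof -
  have "Const c * P = Poly_Mapping.map ((*) c) P"
    by (simp add: Const_def mult_map_scale_conv_mult)
  thus ?thesis by (simp add: Poly_Mapping.map.rep_eq when_def)
qed

lemma Const_mult_single: "Const c * Poly_Mapping.single e d = Poly_Mapping.single e (c * d)"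
  by (simp add: Const_def mult_single)

lemma Const_add: "Const (a + b) = Const a + Const b"
  by (simp add: Const_def single_add)
lemma Const_diff: "Const (a - b) = (Const a - Const b :: 'k::comm_ring_1 mpoly)"
  by (simp add: Const_def single_diff)
lemma Const_mult: "Const (a * b) = (Const a * Const b :: 'k::comm_ring_1 mpoly)"
  by (simp add: Const_def mult_single)
lemma Const_0[simp]: "Const 0 = 0" by (simp add: Const_def)
lemma Const_1[simp]: "Const 1 = 1" by (simp add: Const_def)
lemma Const_power: "Const (a ^ k) = (Const a ^ k :: 'k::comm_ring_1 mpoly)"
  by (induction k) (simp_all add: Const_mult)

lemma poly_expand: "p = (\<Sum>e\<in>ks p. Poly_Mapping.single e (lk p e))"
proof (rule poly_mapping_eqI)
  fix k
  have "lk (\<Sum>e\<in>ks p. Poly_Mapping.single e (lk p e)) k = (\<Sum>e\<in>ks p. (if e = k then lk p e else 0))"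
    by (simp add: lookup_sum lookup_single when_def eq_commute)
  also have "\<dots> = lk p k"
    by (cases "k \<in> ks p") (auto simp: in_keys_iff)
  finally show "lk p k = lk (\<Sum>e\<in>ks p. Poly_Mapping.single e (lk p e)) k" by simp
qed

definition ext :: "((nat \<Rightarrow>\<^sub>0 nat) \<Rightarrow> 'k::comm_ring_1 mpoly) \<Rightarrow> 'k mpoly \<Rightarrow> 'k mpoly" where
  "ext f p = (\<Sum>e\<in>ks p. Const (lk p e) * f e)"

lemma ext_superset: "finite S \<Longrightarrow> ks p \<subseteq> S \<Longrightarrow> ext f p = (\<Sum>e\<in>S. Const (lk p e) * f e)"
  unfolding ext_def by (rule sum.mono_neutral_left) (auto simp: in_keys_iff)

lemma ext_add: "ext f (p + q) = ext f p + ext f q"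
proof -
  let ?S = "ks p \<union> ks q"
  have "ext f (p + q) = (\<Sum>e\<in>?S. Const (lk (p+q) e) * f e)"
    by (rule ext_superset) (auto dest: set_mp[OF keys_add])
  also have "\<dots> = (\<Sum>e\<in>?S. Const (lk p e) * f e) + (\<Sum>e\<in>?S. Const (lk q e) * f e)"
    by (simp add: lookup_add Const_add distrib_right sum.distrib)
  also have "\<dots> = ext f p + ext f q"
    by (simp add: ext_superset[of "?S" p f] ext_superset[of "?S" q f])
  finally show ?thesis .
qed

lemma ext_zero[simp]: "ext f 0 = 0" by (simp add: ext_def)

lemma ext_uminus: "ext f (- p) = - ext f p"
  using ext_add[of f p "-p"] by (simp add: eq_neg_iff_add_eq_0 add.commute)

lemma ext_diff: "ext f (p - q) = ext f p - ext f q"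
  using ext_add[of f "p - q" q] by (simp add: algebra_simps)

lemma ext_sum: "ext f (\<Sum>i\<in>A. g i) = (\<Sum>i\<in>A. ext f (g i))"
  by (induction A rule: infinite_finite_induct) (simp_all add: ext_add)

lemma ext_single: "ext f (Poly_Mapping.single e c) = Const c * f e"
  by (simp add: ext_def)

lemma ext_Const_mult: "ext f (Const c * p) = Const c * ext f p"
proof -
  have "ext f (Const c * p) = (\<Sum>e\<in>ks p. Const (lk (Const c * p) e) * f e)"
    by (rule ext_superset) (auto simp: in_keys_iff lookup_Const_mult)
  thus ?thesis by (simp add: ext_def lookup_Const_mult Const_mult sum_distrib_left mult.assoc)
qed

definition mm :: "(nat \<Rightarrow> 'k::comm_ring_1 mpoly) \<Rightarrow> (nat \<Rightarrow>\<^sub>0 nat) \<Rightarrow> 'k mpoly" where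
  "mm \<sigma> e = (\<Prod>i\<in>ks e. \<sigma> i ^ lk e i)"

lemma subst_ext: "subst \<sigma> = ext (mm \<sigma>)"
  by (simp add: fun_eq_iff subst_def ext_def mm_def)

lemma mm_superset: "finite S \<Longrightarrow> ks e \<subseteq> S \<Longrightarrow> mm \<sigma> e = (\<Prod>i\<in>S. \<sigma> i ^ lk e i)"
  unfolding mm_def by (rule prod.mono_neutral_left) (auto simp: in_keys_iff)

lemma mm_add: "mm \<sigma> (e + e') = mm \<sigma> e * mm \<sigma> e'"
proof -
  let ?S = "ks e \<union> ks e'"
  have "mm \<sigma> (e + e') = (\<Prod>i\<in>?S. \<sigma> i ^ lk (e+e') i)"
    by (rule mm_superset) (auto dest: set_mp[OF keys_add])
  also have "\<dots> = (\<Prod>i\<in>?S. \<sigma> i ^ lk e i) * (\<Prod>i\<in>?S. \<sigma> i ^ lk e' i)"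
    by (simp add: lookup_add power_add prod.distrib)
  also have "\<dots> = mm \<sigma> e * mm \<sigma> e'"
    by (simp add: mm_superset[of "?S" e] mm_superset[of "?S" e'])
  finally show ?thesis .
qed

lemma mm_zero[simp]: "mm \<sigma> 0 = 1" by (simp add: mm_def)

lemma mm_single: "mm \<sigma> (Poly_Mapping.single i k) = \<sigma> i ^ k"
  by (cases "k = 0") (simp_all add: mm_def)

lemma subst_add: "subst \<sigma> (p + q) = subst \<sigma> p + subst \<sigma> q"
  by (simp add: subst_ext ext_add)
lemma subst_diff: "subst \<sigma> (p - q) = subst \<sigma> p - subst \<sigma> q"
  by (simp add: subst_ext ext_diff)
lemma subst_uminus: "subst \<sigma> (- p) = - subst \<sigma> p"
  by (simp add: subst_ext ext_uminus)
lemma subst_sum: "subst \<sigma> (\<Sum>i\<in>A. g i) = (\<Sum>i\<in>A. subst \<sigma> (g i))"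
  by (simp add: subst_ext ext_sum)
lemma subst_zero[simp]: "subst \<sigma> 0 = 0"
  by (simp add: subst_ext)
lemma subst_single: "subst \<sigma> (Poly_Mapping.single e c) = Const c * mm \<sigma> e"
  by (simp add: subst_ext ext_single)
lemma subst_Const_mult: "subst \<sigma> (Const c * p) = Const c * subst \<sigma> p"
  by (simp add: subst_ext ext_Const_mult)
lemma subst_Const[simp]: "subst \<sigma> (Const c) = Const c"
  using subst_single[of \<sigma> 0 c] by (simp add: Const_def)
lemma subst_Var[simp]: "subst \<sigma> (Var i) = \<sigma> i"
  by (simp add: Var_def subst_single mm_single)

lemma subst_mult: "subst \<sigma> (p * q) = subst \<sigma> p * subst \<sigma> q"
proof -
  have "p * q = (\<Sum>e\<in>ks p. \<Sum>e'\<in>ks q. Poly_Mapping.single e (lk p e) * Poly_Mapping.single e' (lk q e'))"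
    by (subst poly_expand[of p], subst poly_expand[of q]) (simp add: sum_distrib_left sum_distrib_right sum.swap[of _ "ks q"])
  hence "subst \<sigma> (p * q) = (\<Sum>e\<in>ks p. \<Sum>e'\<in>ks q. (Const (lk p e) * mm \<sigma> e) * (Const (lk q e') * mm \<sigma> e'))"
    by (simp add: subst_sum mult_single subst_single mm_add Const_mult mult_ac)
  also have "\<dots> = (\<Sum>e\<in>ks p. Const (lk p e) * mm \<sigma> e) * (\<Sum>e'\<in>ks q. Const (lk q e') * mm \<sigma> e')"
    by (simp add: sum_distrib_left sum_distrib_right sum.swap[of _ "ks q"])
  finally show ?thesis by (simp add: subst_ext ext_def)
qed

lemma subst_one[simp]: "subst \<sigma> 1 = 1"
  using subst_Const[of \<sigma> 1] by simp

lemma subst_power: "subst \<sigma> (p ^ k) = subst \<sigma> p ^ k"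
  by (induction k) (simp_all add: subst_mult)

lemma subst_prod: "subst \<sigma> (\<Prod>i\<in>A. g i) = (\<Prod>i\<in>A. subst \<sigma> (g i))"
  by (induction A rule: infinite_finite_induct) (simp_all add: subst_mult)

lemma vars_in_iff: "vars_in S p \<longleftrightarrow> (\<forall>m\<in>ks p. ks m \<subseteq> S)"
  by (simp add: vars_in_def)

lemma vars_in_zero[simp]: "vars_in S 0" by (simp add: vars_in_def)

lemma vars_in_add: "vars_in S p \<Longrightarrow> vars_in S q \<Longrightarrow> vars_in S (p + q)"
  unfolding vars_in_def
proof (intro ballI)
  fix m assume "\<forall>m\<in>ks p. ks m \<subseteq> S" "\<forall>m\<in>ks q. ks m \<subseteq> S" "m \<in> ks (p + q)"
  moreover have "m \<in> ks p \<union> ks q" using keys_add[of p q] \<open>m \<in> ks (p + q)\<close> by (rule subsetD)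
  ultimately show "ks m \<subseteq> S" by auto
qed

lemma vars_in_uminus: "vars_in S p \<Longrightarrow> vars_in S (- p)"
  unfolding vars_in_def by (simp add: in_keys_iff)

lemma vars_in_diff: "vars_in S p \<Longrightarrow> vars_in S q \<Longrightarrow> vars_in S (p - q :: 'k::comm_ring_1 mpoly)"
  using vars_in_add[of S p "-q"] vars_in_uminus[of S q] by simp

lemma vars_in_single: "ks e \<subseteq> S \<Longrightarrow> vars_in S (Poly_Mapping.single e c)"
  by (simp add: vars_in_def)

lemma vars_in_Const[simp]: "vars_in S (Const c)"
  by (simp add: vars_in_def Const_def)

lemma vars_in_one[simp]: "vars_in S (1 :: 'k::comm_ring_1 mpoly)"
  using vars_in_Const[of S 1] by simp

lemma vars_in_Var: "i \<in> S \<Longrightarrow> vars_in S (Var i)"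
  by (simp add: vars_in_def Var_def)

lemma vars_in_mult: "vars_in S p \<Longrightarrow> vars_in S q \<Longrightarrow> vars_in S (p * q)"
proof (unfold vars_in_def, intro ballI)
  fix m assume p: "\<forall>m\<in>ks p. ks m \<subseteq> S" and q: "\<forall>m\<in>ks q. ks m \<subseteq> S" and m: "m \<in> ks (p * q)"
  then obtain a b where "m = a + b" "a \<in> ks p" "b \<in> ks q" using keys_mult by blast
  moreover have "ks (a + b) \<subseteq> ks a \<union> ks b" by (rule keys_add)
  ultimately show "ks m \<subseteq> S" using p q by auto
qed

lemma vars_in_sum: "(\<And>i. i \<in> A \<Longrightarrow> vars_in S (f i)) \<Longrightarrow> vars_in S (\<Sum>i\<in>A. f i)"
  by (induction A rule: infinite_finite_induct) (auto intro: vars_in_add)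

lemma vars_in_prod: "(\<And>i. i \<in> A \<Longrightarrow> vars_in S (f i)) \<Longrightarrow> vars_in S (\<Prod>i\<in>A. f i :: 'k::comm_ring_1 mpoly)"
  by (induction A rule: infinite_finite_induct) (auto intro: vars_in_mult)

lemma vars_in_power: "vars_in S p \<Longrightarrow> vars_in S (p ^ k :: 'k::comm_ring_1 mpoly)"
  by (induction k) (auto intro: vars_in_mult)

lemma vars_in_mono: "vars_in S p \<Longrightarrow> S \<subseteq> T \<Longrightarrow> vars_in T p"
  by (auto simp: vars_in_def)

lemma vars_in_subst:
  assumes "vars_in S p" "\<And>i. i \<in> S \<Longrightarrow> vars_in T (\<sigma> i)"
  shows "vars_in T (subst \<sigma> p)"
  unfolding subst_ext ext_def
proof (intro vars_in_sum vars_in_mult vars_in_Const)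
  fix e assume e: "e \<in> ks p"
  show "vars_in T (mm \<sigma> e)" unfolding mm_def
  proof (intro vars_in_prod vars_in_power)
    fix i assume "i \<in> ks e"
    hence "i \<in> S" using e assms(1) by (auto simp: vars_in_def)
    thus "vars_in T (\<sigma> i)" using assms(2) by blast
  qed
qed

lemma ideal_genI:
  assumes "finite F" "F \<subseteq> G" "\<forall>g\<in>F. vars_in S (h g)" "x = (\<Sum>g\<in>F. h g * g)"
  shows "x \<in> ideal_gen S G"
  unfolding ideal_gen_def using assms by (intro CollectI exI conjI)

lemma ideal_genE:
  assumes "x \<in> ideal_gen S G"
  obtains F h where "finite F" "F \<subseteq> G" "\<forall>g\<in>F. vars_in S (h g)" "x = (\<Sum>g\<in>F. h g * g)"
  using assms unfolding ideal_gen_def by (auto simp only: mem_Collect_eq)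

lemma ideal_zero: "0 \<in> ideal_gen S G"
  by (rule ideal_genI[of "{}"]) simp_all

lemma ideal_gen_mem: "g \<in> G \<Longrightarrow> vars_in S h \<Longrightarrow> h * g \<in> ideal_gen S G"
  by (rule ideal_genI[of "{g}" _ _ "\<lambda>_. h"]) simp_all

lemma ideal_add:
  assumes "x \<in> ideal_gen S G" "y \<in> ideal_gen S G"
  shows "x + y \<in> ideal_gen S G"
proof -
  obtain F1 h1 where 1: "finite F1" "F1 \<subseteq> G" "\<forall>g\<in>F1. vars_in S (h1 g)" "x = (\<Sum>g\<in>F1. h1 g * g)"
    using assms(1) by (rule ideal_genE)
  obtain F2 h2 where 2: "finite F2" "F2 \<subseteq> G" "\<forall>g\<in>F2. vars_in S (h2 g)" "y = (\<Sum>g\<in>F2. h2 g * g)"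
    using assms(2) by (rule ideal_genE)
  define h where "h g = (if g \<in> F1 then h1 g else 0) + (if g \<in> F2 then h2 g else 0)" for g
  have "(\<Sum>g\<in>F1 \<union> F2. h g * g) = (\<Sum>g\<in>F1 \<union> F2. (if g \<in> F1 then h1 g * g else 0)) + (\<Sum>g\<in>F1 \<union> F2. (if g \<in> F2 then h2 g * g else 0))"
    unfolding sum.distrib[symmetric] by (rule sum.cong) (simp_all add: h_def distrib_right)
  also have "(\<Sum>g\<in>F1 \<union> F2. (if g \<in> F1 then h1 g * g else 0)) = x"
    unfolding 1(4) using 1(1) 2(1) by (intro sum.mono_neutral_cong_right) auto
  also have "(\<Sum>g\<in>F1 \<union> F2. (if g \<in> F2 then h2 g * g else 0)) = y"
    unfolding 2(4) using 1(1) 2(1) by (intro sum.mono_neutral_cong_right) auto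
  finally have "x + y = (\<Sum>g\<in>F1 \<union> F2. h g * g)" by simp
  moreover have "\<forall>g\<in>F1 \<union> F2. vars_in S (h g)"
    using 1(3) 2(3) by (auto simp: h_def intro!: vars_in_add)
  moreover have "F1 \<union> F2 \<subseteq> G" using 1(2) 2(2) by simp
  ultimately show ?thesis using 1(1) 2(1) by (intro ideal_genI) simp_all
qed

lemma ideal_mult:
  assumes "x \<in> ideal_gen S G" "vars_in S h"
  shows "h * x \<in> ideal_gen S G"
proof -
  obtain F1 h1 where 1: "finite F1" "F1 \<subseteq> G" "\<forall>g\<in>F1. vars_in S (h1 g)" "x = (\<Sum>g\<in>F1. h1 g * g)"
    using assms(1) by (rule ideal_genE)
  have "h * x = (\<Sum>g\<in>F1. (h * h1 g) * g)" using 1(4) by (simp add: sum_distrib_left mult.assoc)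
  moreover have "\<forall>g\<in>F1. vars_in S (h * h1 g)" using 1(3) assms(2) by (auto intro: vars_in_mult)
  ultimately show ?thesis using 1(1,2) by (intro ideal_genI) simp_all
qed

lemma ideal_uminus: "x \<in> ideal_gen S G \<Longrightarrow> - x \<in> ideal_gen S G"
  using ideal_mult[of x S G "- 1"] by (simp add: vars_in_uminus)

lemma ideal_diff: "x \<in> ideal_gen S G \<Longrightarrow> y \<in> ideal_gen S G \<Longrightarrow> x - y \<in> ideal_gen S G"
  using ideal_add[of x S G "-y"] ideal_uminus[of y] by simp

lemma ideal_sum: "(\<And>i. i \<in> A \<Longrightarrow> f i \<in> ideal_gen S G) \<Longrightarrow> (\<Sum>i\<in>A. f i) \<in> ideal_gen S G"
  by (induction A rule: infinite_finite_induct) (auto intro: ideal_add ideal_zero)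

lemma ideal_Const_mult: "x \<in> ideal_gen S G \<Longrightarrow> Const c * x \<in> ideal_gen S G"
  by (rule ideal_mult) simp_all

lemma ideal_mono: "S \<subseteq> T \<Longrightarrow> G \<subseteq> G' \<Longrightarrow> ideal_gen S G \<subseteq> ideal_gen T G'"
proof
  fix x assume st: "S \<subseteq> T" "G \<subseteq> G'" and "x \<in> ideal_gen S G"
  then obtain F1 h1 where 1: "finite F1" "F1 \<subseteq> G" "\<forall>g\<in>F1. vars_in S (h1 g)" "x = (\<Sum>g\<in>F1. h1 g * g)"
    by (auto elim: ideal_genE)
  show "x \<in> ideal_gen T G'"
    using 1 st by (intro ideal_genI[of F1 _ _ h1]) (auto intro: vars_in_mono)
qed

lemma ideal_trans:
  assumes "G \<subseteq> ideal_gen S G'" "x \<in> ideal_gen S G"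
  shows "x \<in> ideal_gen S G'"
proof -
  obtain F1 h1 where 1: "finite F1" "F1 \<subseteq> G" "\<forall>g\<in>F1. vars_in S (h1 g)" "x = (\<Sum>g\<in>F1. h1 g * g)"
    using assms(2) by (rule ideal_genE)
  show ?thesis unfolding 1(4) using 1 assms(1) by (intro ideal_sum ideal_mult) auto
qed

lemma ideal_subst:
  assumes "\<And>i. i \<in> S \<Longrightarrow> vars_in T (\<sigma> i)" "\<And>g. g \<in> G \<Longrightarrow> subst \<sigma> g \<in> ideal_gen T G'"
    "x \<in> ideal_gen S G"
  shows "subst \<sigma> x \<in> ideal_gen T G'"
proof -
  obtain F1 h1 where 1: "finite F1" "F1 \<subseteq> G" "\<forall>g\<in>F1. vars_in S (h1 g)" "x = (\<Sum>g\<in>F1. h1 g * g)"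
    using assms(3) by (rule ideal_genE)
  have "subst \<sigma> x = (\<Sum>g\<in>F1. subst \<sigma> (h1 g) * subst \<sigma> g)"
    using 1 by (simp add: subst_sum subst_mult)
  also have "\<dots> \<in> ideal_gen T G'"
    using 1 assms by (intro ideal_sum ideal_mult vars_in_subst[of S]) auto
  finally show ?thesis .
qed

lemma CHAR_field:
  assumes "prime p" "of_nat p = (0::'k::field)"
  shows "CHAR('k) = p"
proof -
  have "CHAR('k) dvd p" using assms(2) by (simp add: of_nat_eq_0_iff_char_dvd)
  moreover have "CHAR('k) \<noteq> 1"
  proof
    assume "CHAR('k) = 1"
    hence "of_nat 1 = (0::'k)" using of_nat_CHAR[where 'a='k] by simp
    thus False by simp
  qed
  moreover have "\<forall>m. m dvd p \<longrightarrow> m = 1 \<or> m = p" using assms(1) unfolding prime_nat_iff by blast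
  ultimately show ?thesis by blast
qed

lemma of_nat_mpoly: "(of_nat n :: 'k::comm_ring_1 mpoly) = Const (of_nat n)"
  by (simp add: Const_def)

lemma CHAR_mpoly:
  assumes "prime p" "of_nat p = (0::'k::field)"
  shows "CHAR('k mpoly) = p"
proof (rule CHAR_eqI)
  show "of_nat p = (0 :: 'k mpoly)" using assms by (simp add: of_nat_mpoly)
  fix x assume "of_nat x = (0 :: 'k mpoly)"
  hence "lk (Const (of_nat x :: 'k)) 0 = 0" by (simp add: of_nat_mpoly)
  hence "of_nat x = (0::'k)" by (simp add: Const_def lookup_of_nat)
  thus "p dvd x" using CHAR_field[OF assms] by (simp add: of_nat_eq_0_iff_char_dvd)
qed

lemma frob_mpoly_sum:
  assumes "prime p" "of_nat p = (0::'k::field)"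
  shows "(\<Sum>i\<in>A. f i :: 'k mpoly) ^ (p ^ r) = (\<Sum>i\<in>A. f i ^ (p ^ r))"
  by (rule freshmans_dream_sum') (simp_all add: CHAR_mpoly[OF assms] assms(1))

lemma frob_mpoly_add:
  assumes "prime p" "of_nat p = (0::'k::field)"
  shows "(x + y :: 'k mpoly) ^ (p ^ r) = x ^ (p ^ r) + y ^ (p ^ r)"
  by (rule freshmans_dream') (simp_all add: CHAR_mpoly[OF assms] assms(1))

lemma frob_field_sum:
  assumes "prime p" "of_nat p = (0::'k::field)"
  shows "(\<Sum>i\<in>A. f i :: 'k) ^ p = (\<Sum>i\<in>A. f i ^ p)"
  by (rule freshmans_dream_sum) (simp_all add: CHAR_field[OF assms] assms(1))

lemma fermat_field:
  assumes "prime p" "of_nat p = (0::'k::field)"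
  shows "(of_nat m :: 'k) ^ p = of_nat m"
proof -
  have "(\<Sum>i<m. 1::'k) ^ p = (\<Sum>i<m. (1::'k) ^ p)" by (rule frob_field_sum[OF assms])
  thus ?thesis by simp
qed

lemma val_ring_iff: "x \<in> val_ring v \<longleftrightarrow> x = 0 \<or> 0 \<le> v x"
  by (simp add: val_ring_def vball_def)

lemma dv_one: "discrete_valuation v \<Longrightarrow> v 1 = 0"
proof -
  assume "discrete_valuation v"
  hence "v (1*1) = v 1 + v 1" unfolding discrete_valuation_def by (simp only: one_neq_zero not_False_eq_True simp_thms)
  thus ?thesis by simp
qed

lemma vr_zero[simp]: "0 \<in> val_ring v" by (simp add: val_ring_iff)
lemma vr_one: "discrete_valuation v \<Longrightarrow> 1 \<in> val_ring v" by (simp add: val_ring_iff dv_one)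

lemma vr_mult: "discrete_valuation v \<Longrightarrow> x \<in> val_ring v \<Longrightarrow> y \<in> val_ring v \<Longrightarrow> x * y \<in> val_ring v"
proof -
  assume d: "discrete_valuation v" and x: "x \<in> val_ring v" and y: "y \<in> val_ring v"
  show ?thesis
  proof (cases "x = 0 \<or> y = 0")
    case True thus ?thesis by (auto simp: val_ring_iff)
  next
    case False
    hence "v (x * y) = v x + v y" using d unfolding discrete_valuation_def by blast
    moreover have "0 \<le> v x" "0 \<le> v y" using x y False by (auto simp: val_ring_iff)
    ultimately show ?thesis by (simp add: val_ring_iff)
  qed
qed

lemma vr_add: "discrete_valuation v \<Longrightarrow> x \<in> val_ring v \<Longrightarrow> y \<in> val_ring v \<Longrightarrow> x + y \<in> val_ring v"
proof -
  assume d: "discrete_valuation v" and x: "x \<in> val_ring v" and y: "y \<in> val_ring v"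
  show ?thesis
  proof (cases "x = 0 \<or> y = 0 \<or> x + y = 0")
    case True thus ?thesis using x y by (auto simp: val_ring_iff)
  next
    case False
    hence "min (v x) (v y) \<le> v (x + y)" using d unfolding discrete_valuation_def by blast
    moreover have "0 \<le> v x" "0 \<le> v y" using x y False by (auto simp: val_ring_iff)
    ultimately have "0 \<le> v (x + y)" by linarith
    thus ?thesis by (simp add: val_ring_iff)
  qed
qed

lemma vr_minus_one: "discrete_valuation v \<Longrightarrow> - 1 \<in> val_ring v"
proof -
  assume d: "discrete_valuation v"
  have "v ((-1) * (-1)) = v (-1) + v (-1)" using d unfolding discrete_valuation_def by (metis neg_equal_0_iff_equal one_neq_zero)
  hence "v (-1) = 0" using dv_one[OF d] by simp
  thus ?thesis by (simp add: val_ring_iff)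
qed

lemma vr_uminus: "discrete_valuation v \<Longrightarrow> x \<in> val_ring v \<Longrightarrow> - x \<in> val_ring v"
proof -
  assume d: "discrete_valuation v" and x: "x \<in> val_ring v"
  have "(-1) * x \<in> val_ring v" by (rule vr_mult[OF d vr_minus_one[OF d] x])
  thus ?thesis by simp
qed

lemma vr_diff: "discrete_valuation v \<Longrightarrow> x \<in> val_ring v \<Longrightarrow> y \<in> val_ring v \<Longrightarrow> x - y \<in> val_ring v"
  using vr_add[of v x "-y"] vr_uminus[of v y] by simp

lemma vr_power: "discrete_valuation v \<Longrightarrow> x \<in> val_ring v \<Longrightarrow> x ^ k \<in> val_ring v"
  by (induction k) (auto intro: vr_mult vr_one)

lemma vr_of_nat: "discrete_valuation v \<Longrightarrow> of_nat m \<in> val_ring v"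
  by (induction m) (auto intro: vr_add vr_one)

lemma vr_sum: "discrete_valuation v \<Longrightarrow> (\<And>i. i \<in> A \<Longrightarrow> f i \<in> val_ring v) \<Longrightarrow> (\<Sum>i\<in>A. f i) \<in> val_ring v"
  by (induction A rule: infinite_finite_induct) (auto intro: vr_add)

lemma vr_cancel:
  assumes d: "discrete_valuation v" and pr: "prime p" and ch: "of_nat p = (0::'k::field)"
    and nz: "(of_nat m :: 'k) \<noteq> 0" and y: "(y::'k) * of_nat m \<in> val_ring v"
  shows "y \<in> val_ring v"
proof -
  let ?c = "of_nat m :: 'k"
  have p2: "p \<ge> 2" using pr prime_ge_2_nat by blast
  have "?c ^ p = ?c" by (rule fermat_field[OF pr ch])
  moreover have "p = Suc (Suc (p - 2))" using p2 by simp
  ultimately have "?c * ?c ^ (Suc (p - 2)) = ?c * 1" by (metis power_Suc mult_1_right)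
  hence c1: "?c ^ (Suc (p - 2)) = 1" using nz by simp
  have "y = y * ?c ^ (Suc (p - 2))" by (simp only: c1 mult_1_right)
  also have "\<dots> = (y * ?c) * ?c ^ (p - 2)" by (simp add: mult_ac)
  also have "\<dots> \<in> val_ring v" by (rule vr_mult[OF d y vr_power[OF d vr_of_nat[OF d]]])
  finally show ?thesis .
qed

lemma coeffs_in_iff: "coeffs_in R p \<longleftrightarrow> (\<forall>m. lk p m \<in> R)" by (simp add: coeffs_in_def)

abbreviation sg :: "nat \<Rightarrow> nat \<Rightarrow> (nat \<Rightarrow>\<^sub>0 nat)" where "sg \<equiv> Poly_Mapping.single"

definition mon :: "(nat \<Rightarrow>\<^sub>0 nat) \<Rightarrow> 'k::comm_ring_1 mpoly" where
  "mon e = Poly_Mapping.single e 1"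

definition tdeg :: "(nat \<Rightarrow>\<^sub>0 nat) \<Rightarrow> nat" where
  "tdeg e = (\<Sum>i\<in>ks e. lk e i)"

lemma tdeg_superset: "finite S \<Longrightarrow> ks e \<subseteq> S \<Longrightarrow> tdeg e = (\<Sum>i\<in>S. lk e i)"
  unfolding tdeg_def by (rule sum.mono_neutral_left) (auto simp: in_keys_iff)

lemma tdeg_add: "tdeg (a + b) = tdeg a + tdeg b"
proof -
  let ?S = "ks a \<union> ks b"
  have "tdeg (a + b) = (\<Sum>i\<in>?S. lk (a + b) i)"
    by (rule tdeg_superset) (auto dest: set_mp[OF keys_add])
  also have "\<dots> = (\<Sum>i\<in>?S. lk a i) + (\<Sum>i\<in>?S. lk b i)"
    by (simp add: lookup_add sum.distrib)
  also have "\<dots> = tdeg a + tdeg b"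
    by (simp add: tdeg_superset[of ?S a] tdeg_superset[of ?S b])
  finally show ?thesis .
qed

lemma tdeg_single[simp]: "tdeg (sg i k) = k"
  by (simp add: tdeg_def)

lemma lk_sg: "lk (sg i k) x = (if x = i then k else 0)"
  by (simp add: lookup_single when_def)

lemma sub_add_back: "q \<le> lk e j \<Longrightarrow> e - sg j q + sg j q = e"
  by (rule poly_mapping_eqI) (simp add: lookup_add lookup_minus lk_sg)

lemma tdeg_sub: "q \<le> lk e j \<Longrightarrow> tdeg (e - sg j q) = tdeg e - q"
  using tdeg_add[of "e - sg j q" "sg j q"] sub_add_back[of q e j] by simp

lemma tdeg_ge: "q \<le> lk e j \<Longrightarrow> q \<le> tdeg e"
  using tdeg_add[of "e - sg j q" "sg j q"] sub_add_back[of q e j] by simp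

lemma tdeg_step: "2 \<le> q \<Longrightarrow> q \<le> lk e j \<Longrightarrow> tdeg (e - sg j q + sg i 1) < tdeg e"
  using tdeg_add[of "e - sg j q" "sg i 1"] tdeg_sub[of q e j] tdeg_ge[of q e j] by simp

definition reduced :: "nat \<Rightarrow> nat \<Rightarrow> (nat \<Rightarrow>\<^sub>0 nat) \<Rightarrow> bool" where
  "reduced q m e \<longleftrightarrow> (\<forall>j<m. lk e j < q)"

definition piv :: "nat \<Rightarrow> nat \<Rightarrow> (nat \<Rightarrow>\<^sub>0 nat) \<Rightarrow> nat" where
  "piv q m e = (LEAST j. j < m \<and> q \<le> lk e j)"

lemma piv: "\<not> reduced q m e \<Longrightarrow> piv q m e < m \<and> q \<le> lk e (piv q m e)"
  unfolding reduced_def piv_def by (rule LeastI_ex) (auto simp: not_less)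

function nfm :: "nat \<Rightarrow> nat \<Rightarrow> (nat \<Rightarrow> nat \<Rightarrow> 'k::comm_ring_1) \<Rightarrow> (nat \<Rightarrow>\<^sub>0 nat) \<Rightarrow> 'k mpoly" where
  "nfm q m D e = (if q < 2 \<or> reduced q m e then mon e else
     (\<Sum>i<m. Const (D i (piv q m e)) * nfm q m D (e - sg (piv q m e) q + sg i 1)))"
  by auto
termination
proof (relation "measure (\<lambda>(q, m, D, e). tdeg e)")
  show "wf (measure (\<lambda>(q, m, D, e). tdeg e))" by simp
  fix q m D e i
  assume "\<not> (q < 2 \<or> reduced q m e)"
  thus "((q, m, D, e - sg (piv q m e) q + sg i 1), q, m, D, e) \<in> measure (\<lambda>(q, m, D, e). tdeg e)"
    using piv[of q m e] tdeg_step[of q e "piv q m e" i] by auto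
qed

declare nfm.simps[simp del]

lemma nfm_red: "reduced q m e \<Longrightarrow> nfm q m D e = mon e"
  by (simp add: nfm.simps)

lemma nfm_piv: "2 \<le> q \<Longrightarrow> \<not> reduced q m e \<Longrightarrow>
   nfm q m D e = (\<Sum>i<m. Const (D i (piv q m e)) * nfm q m D (e - sg (piv q m e) q + sg i 1))"
  by (subst nfm.simps) simp

lemma swap_mon:
  assumes "q \<le> lk e j" "q \<le> lk e k" "j \<noteq> k"
  shows "e - sg j q + sg i 1 - sg k q + sg l 1 = e - sg k q + sg l 1 - sg j q + sg i 1"
  by (rule poly_mapping_eqI) (use assms in \<open>auto simp: lookup_add lookup_minus lk_sg\<close>)

lemma nfm_step:
  assumes q: "2 \<le> q" and k: "k < m" "q \<le> lk e k"
  shows "nfm q m D e = (\<Sum>i<m. Const (D i k) * nfm q m D (e - sg k q + sg i 1))"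
  using k
proof (induction "tdeg e" arbitrary: e k rule: less_induct)
  case less
  have nr: "\<not> reduced q m e" using less.prems by (auto simp: reduced_def)
  define j where "j = piv q m e"
  have j: "j < m" "q \<le> lk e j" using piv[OF nr] by (auto simp: j_def)
  have e1: "nfm q m D e = (\<Sum>i<m. Const (D i j) * nfm q m D (e - sg j q + sg i 1))"
    unfolding j_def by (rule nfm_piv[OF q nr])
  show ?case
  proof (cases "j = k")
    case True thus ?thesis using e1 by simp
  next
    case False
    have A: "nfm q m D (e - sg j q + sg i 1) = (\<Sum>l<m. Const (D l k) * nfm q m D (e - sg j q + sg i 1 - sg k q + sg l 1))" for i
    proof (rule less.hyps)
      show "tdeg (e - sg j q + sg i 1) < tdeg e" by (rule tdeg_step[OF q j(2)])
      show "k < m" by fact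
      show "q \<le> lk (e - sg j q + sg i 1) k" using less.prems False by (simp add: lookup_add lookup_minus lk_sg)
    qed
    have B: "nfm q m D (e - sg k q + sg l 1) = (\<Sum>i<m. Const (D i j) * nfm q m D (e - sg k q + sg l 1 - sg j q + sg i 1))" for l
    proof (rule less.hyps)
      show "tdeg (e - sg k q + sg l 1) < tdeg e" by (rule tdeg_step[OF q less.prems(2)])
      show "j < m" by fact
      show "q \<le> lk (e - sg k q + sg l 1) j" using j False by (simp add: lookup_add lookup_minus lk_sg)
    qed
    have "nfm q m D e = (\<Sum>i<m. \<Sum>l<m. Const (D i j) * Const (D l k) * nfm q m D (e - sg j q + sg i 1 - sg k q + sg l 1))"
      by (simp only: e1 A sum_distrib_left mult.assoc)
    also have "\<dots> = (\<Sum>l<m. \<Sum>i<m. Const (D l k) * Const (D i j) * nfm q m D (e - sg k q + sg l 1 - sg j q + sg i 1))"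
      by (subst sum.swap) (intro sum.cong refl, simp only: swap_mon[OF j(2) less.prems(2) False] mult.commute)
    also have "\<dots> = (\<Sum>l<m. Const (D l k) * nfm q m D (e - sg k q + sg l 1))"
      by (simp only: B sum_distrib_left mult.assoc)
    finally show ?thesis .
  qed
qed

definition gen :: "nat \<Rightarrow> nat \<Rightarrow> (nat \<Rightarrow> nat \<Rightarrow> 'k::comm_ring_1) \<Rightarrow> nat \<Rightarrow> 'k mpoly" where
  "gen q m D j = Var j ^ q - (\<Sum>i<m. Const (D i j) * Var i)"

definition Gs :: "nat \<Rightarrow> nat \<Rightarrow> (nat \<Rightarrow> nat \<Rightarrow> 'k::comm_ring_1) \<Rightarrow> 'k mpoly set" where
  "Gs q m D = {gen q m D j | j. j < m}"

definition nf :: "nat \<Rightarrow> nat \<Rightarrow> (nat \<Rightarrow> nat \<Rightarrow> 'k::comm_ring_1) \<Rightarrow> 'k mpoly \<Rightarrow> 'k mpoly" where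
  "nf q m D = ext (nfm q m D)"

lemma Var_mon: "Var i = mon (sg i 1)" by (simp add: Var_def mon_def)

lemma mon_mult: "mon a * mon b = (mon (a + b) :: 'k::comm_ring_1 mpoly)"
  by (simp add: mon_def mult_single)

lemma single_Const_mon: "Poly_Mapping.single e c = Const c * mon e"
  by (simp add: Const_mult_single mon_def)

lemma Var_power: "Var j ^ k = (mon (sg j k) :: 'k::comm_ring_1 mpoly)"
proof (induction k)
  case 0 thus ?case by (simp add: mon_def)
next
  case (Suc k)
  have "Var j ^ Suc k = Var j * (Var j ^ k :: 'k mpoly)" by (simp only: power_Suc)
  also have "\<dots> = Var j * (mon (sg j k) :: 'k mpoly)" by (simp only: Suc)
  also have "\<dots> = mon (sg j 1) * (mon (sg j k) :: 'k mpoly)" by (simp only: Var_mon)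
  also have "\<dots> = mon (sg j (Suc k))" by (simp add: mon_mult single_add[symmetric])
  finally show ?case .
qed

lemma nf_single: "nf q m D (Poly_Mapping.single e c) = Const c * nfm q m D e"
  by (simp add: nf_def ext_single)
lemma nf_add: "nf q m D (x + y) = nf q m D x + nf q m D y" by (simp add: nf_def ext_add)
lemma nf_diff: "nf q m D (x - y) = nf q m D x - nf q m D y" by (simp add: nf_def ext_diff)
lemma nf_sum: "nf q m D (\<Sum>i\<in>A. f i) = (\<Sum>i\<in>A. nf q m D (f i))" by (simp add: nf_def ext_sum)
lemma nf_Const_mult: "nf q m D (Const c * x) = Const c * nf q m D x" by (simp add: nf_def ext_Const_mult)
lemma nf_zero[simp]: "nf q m D 0 = 0" by (simp add: nf_def)

lemma nf_kill_single:
  assumes q: "2 \<le> q" and j: "j < m"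
  shows "nf q m D (Poly_Mapping.single e c * gen q m D j) = 0"
proof -
  have 1: "Poly_Mapping.single e c * Var j ^ q = Poly_Mapping.single (e + sg j q) c"
    by (simp add: Var_power mon_def mult_single)
  have 2: "Poly_Mapping.single e c * (Const (D i j) * Var i) = Poly_Mapping.single (e + sg i 1) (c * D i j)" for i
    by (simp add: Var_def Const_def mult_single mult.commute mult.left_commute)
  have "nfm q m D (e + sg j q) = (\<Sum>i<m. Const (D i j) * nfm q m D (e + sg j q - sg j q + sg i 1))"
    by (rule nfm_step[OF q j]) (simp add: lookup_add)
  hence 3: "nfm q m D (e + sg j q) = (\<Sum>i<m. Const (D i j) * nfm q m D (e + sg i 1))" by simp
  show ?thesis
    unfolding gen_def right_diff_distrib sum_distrib_left nf_diff nf_sum 1 2 nf_single 3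
    by (simp add: Const_mult mult.assoc)
qed

lemma nf_kill_gen:
  assumes q: "2 \<le> q" and j: "j < m"
  shows "nf q m D (h * gen q m D j) = 0"
proof -
  have "h * gen q m D j = (\<Sum>e\<in>ks h. Poly_Mapping.single e (lk h e) * gen q m D j)"
    by (subst poly_expand[of h]) (simp add: sum_distrib_right)
  thus ?thesis by (simp add: nf_sum nf_kill_single[OF q j])
qed

lemma nf_kill_ideal:
  assumes q: "2 \<le> q" and x: "x \<in> ideal_gen S (Gs q m D)"
  shows "nf q m D x = 0"
proof -
  obtain F h where F: "finite F" "F \<subseteq> Gs q m D" "x = (\<Sum>g\<in>F. h g * g)"
    using x by (rule ideal_genE)
  have "nf q m D (h g * g) = 0" if "g \<in> F" for g
  proof -
    obtain j where "j < m" "g = gen q m D j" using F(2) \<open>g \<in> F\<close> by (auto simp: Gs_def)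
    thus ?thesis using nf_kill_gen[OF q] by simp
  qed
  thus ?thesis using F(3) by (simp add: nf_sum)
qed

lemma keys_Const_mult: "ks (Const c * P) \<subseteq> ks P"
  by (auto simp: in_keys_iff lookup_Const_mult)

lemma keys_mon: "ks (mon e :: 'k::comm_ring_1 mpoly) = {e}"
  by (simp add: mon_def)

lemma keys_nfm:
  assumes q: "2 \<le> q"
  shows "ks (nfm q m D e) \<subseteq> {\<mu>. reduced q m \<mu> \<and> ks \<mu> \<subseteq> ks e \<union> {..<m}}"
  using q
proof (induction q m D e rule: nfm.induct)
  case (1 q' m D e)
  show ?case
  proof (cases "reduced q' m e")
    case True thus ?thesis by (simp add: nfm_red keys_mon)
  next
    case False
    hence nr: "\<not> reduced q' m e" and q': "2 \<le> q'" using "1.prems" by auto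
    let ?j = "piv q' m e"
    have e: "nfm q' m D e = (\<Sum>i<m. Const (D i ?j) * nfm q' m D (e - sg ?j q' + sg i 1))"
      by (rule nfm_piv[OF q' nr])
    have ks: "ks (e - sg ?j q' + sg i 1) \<subseteq> ks e \<union> {..<m}" if "i < m" for i
    proof
      fix x assume "x \<in> ks (e - sg ?j q' + sg i 1)"
      hence "lk e x - lk (sg ?j q') x + lk (sg i 1) x \<noteq> 0" by (simp add: in_keys_iff lookup_add lookup_minus)
      thus "x \<in> ks e \<union> {..<m}" using that by (cases "x = i") (auto simp: in_keys_iff lk_sg)
    qed
    have sub: "ks (nfm q' m D (e - sg ?j q' + sg i 1)) \<subseteq> {\<mu>. reduced q' m \<mu> \<and> ks \<mu> \<subseteq> ks (e - sg ?j q' + sg i 1) \<union> {..<m}}" if "i < m" for i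
      using "1.IH"[of i] nr q' that by simp
    show ?thesis
    proof
      fix \<mu> assume "\<mu> \<in> ks (nfm q' m D e)"
      hence "\<mu> \<in> (\<Union>i\<in>{..<m}. ks (Const (D i ?j) * nfm q' m D (e - sg ?j q' + sg i 1)))"
        unfolding e by (rule subsetD[OF keys_sum])
      then obtain i where i: "i < m" "\<mu> \<in> ks (Const (D i ?j) * nfm q' m D (e - sg ?j q' + sg i 1))"
        by auto
      have "\<mu> \<in> ks (nfm q' m D (e - sg ?j q' + sg i 1))" using i(2) by (rule subsetD[OF keys_Const_mult])
      hence "reduced q' m \<mu> \<and> ks \<mu> \<subseteq> ks (e - sg ?j q' + sg i 1) \<union> {..<m}"
        using subsetD[OF sub[OF i(1)]] by simp
      thus "\<mu> \<in> {\<mu>. reduced q' m \<mu> \<and> ks \<mu> \<subseteq> ks e \<union> {..<m}}" using ks[OF i(1)] by auto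
    qed
  qed
qed

lemma lk_nfm_piv: "2 \<le> q \<Longrightarrow> \<not> reduced q m e \<Longrightarrow>
   lk (nfm q m D e) \<mu> = (\<Sum>i<m. D i (piv q m e) * lk (nfm q m D (e - sg (piv q m e) q + sg i 1)) \<mu>)"
  by (simp add: nfm_piv lookup_sum lookup_Const_mult)

lemma nfm_coeffs:
  assumes d: "discrete_valuation v" and D: "\<forall>i<m. \<forall>j<m. D i j \<in> val_ring v" and q: "2 \<le> q"
  shows "coeffs_in (val_ring v) (nfm q m D e)"
  using q D
proof (induction q m D e rule: nfm.induct)
  case (1 q' m' D' e)
  show ?case
  proof (cases "reduced q' m' e")
    case True thus ?thesis using d by (simp add: nfm_red coeffs_in_iff mon_def lookup_single when_def vr_one)
  next
    case False
    hence nr: "\<not> reduced q' m' e" and q': "2 \<le> q'" and D': "\<forall>i<m'. \<forall>j<m'. D' i j \<in> val_ring v"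
      using "1.prems" by auto
    have IH: "coeffs_in (val_ring v) (nfm q' m' D' (e - sg (piv q' m' e) q' + sg i 1))" if "i < m'" for i
      using "1.IH"[of i] nr q' D' that by simp
    show ?thesis unfolding coeffs_in_iff
    proof
      fix \<mu>
      show "lk (nfm q' m' D' e) \<mu> \<in> val_ring v"
        unfolding lk_nfm_piv[OF q' nr]
      proof (rule vr_sum[OF d], rule vr_mult[OF d])
        fix i assume i: "i \<in> {..<m'}"
        show "lk (nfm q' m' D' (e - sg (piv q' m' e) q' + sg i 1)) \<mu> \<in> val_ring v"
          using IH[of i] i by (simp add: coeffs_in_iff)
        show "D' i (piv q' m' e) \<in> val_ring v" using D' i piv[OF nr] by simp
      qed
    qed
  qed
qed

lemma lk_nf: "lk (nf q m D p) \<mu> = (\<Sum>e\<in>ks p. lk p e * lk (nfm q m D e) \<mu>)"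
  by (simp add: nf_def ext_def lookup_sum lookup_Const_mult)

lemma nf_coeffs:
  assumes d: "discrete_valuation v" and D: "\<forall>i<m. \<forall>j<m. D i j \<in> val_ring v" and q: "2 \<le> q"
    and p: "coeffs_in (val_ring v) p"
  shows "coeffs_in (val_ring v) (nf q m D p)"
  unfolding coeffs_in_iff lk_nf
proof (intro allI vr_sum[OF d] vr_mult[OF d])
  fix \<mu> e
  show "lk p e \<in> val_ring v" using p by (simp add: coeffs_in_iff)
  show "lk (nfm q m D e) \<mu> \<in> val_ring v" using nfm_coeffs[OF d D q] by (simp add: coeffs_in_iff)
qed

lemma ks_step: "i < m \<Longrightarrow> ks (e - sg j q + sg i 1) \<subseteq> ks e \<union> {..<m}"
proof
  fix x assume i: "i < m" and "x \<in> ks (e - sg j q + sg i 1)"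
  hence "lk e x - lk (sg j q) x + lk (sg i 1) x \<noteq> 0" by (simp add: in_keys_iff lookup_add lookup_minus)
  thus "x \<in> ks e \<union> {..<m}" using i by (cases "x = i") (auto simp: in_keys_iff lk_sg)
qed

lemma ks_sub: "ks (e - sg j q) \<subseteq> ks e"
  by (auto simp: in_keys_iff lookup_minus)

lemma mon_nfm_ideal:
  assumes q: "2 \<le> q" and e: "ks e \<subseteq> S" and m: "{..<m} \<subseteq> S"
  shows "mon e - nfm q m D e \<in> ideal_gen S (Gs q m D)"
  using q e m
proof (induction q m D e rule: nfm.induct)
  case (1 q' m' D' e)
  show ?case
  proof (cases "reduced q' m' e")
    case True thus ?thesis by (simp add: nfm_red ideal_zero)
  next
    case False
    hence nr: "\<not> reduced q' m' e" and q': "2 \<le> q'" and eS: "ks e \<subseteq> S" and mS: "{..<m'} \<subseteq> S"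
      using "1.prems" by auto
    define j where "j = piv q' m' e"
    have j: "j < m'" "q' \<le> lk e j" using piv[OF nr] by (auto simp: j_def)
    define e' where "e' i = e - sg j q' + sg i 1" for i
    have IH: "mon (e' i) - nfm q' m' D' (e' i) \<in> ideal_gen S (Gs q' m' D')" if "i < m'" for i
      using "1.IH"[of i] nr q' mS that ks_step[OF that, of e j q'] eS unfolding e'_def j_def by auto
    have me: "mon e = mon (e - sg j q') * Var j ^ q'"
      by (simp add: Var_power mon_mult sub_add_back[OF j(2)])
    have me2: "mon (e - sg j q') * (\<Sum>i<m'. Const (D' i j) * Var i) = (\<Sum>i<m'. Const (D' i j) * mon (e' i))"
      by (simp add: sum_distrib_left e'_def Var_mon mon_mult mult.left_commute)
    have "mon e - nfm q' m' D' e = mon (e - sg j q') * gen q' m' D' j + (\<Sum>i<m'. Const (D' i j) * (mon (e' i) - nfm q' m' D' (e' i)))"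
      unfolding gen_def right_diff_distrib me2 sum_subtractf
      by (subst nfm_piv[OF q' nr]) (simp add: me e'_def j_def)
    also have "\<dots> \<in> ideal_gen S (Gs q' m' D')"
    proof (rule ideal_add)
      show "mon (e - sg j q') * gen q' m' D' j \<in> ideal_gen S (Gs q' m' D')"
        by (rule ideal_gen_mem) (use j(1) ks_sub[of e j q'] eS in \<open>auto simp: Gs_def mon_def intro!: vars_in_single\<close>)
      show "(\<Sum>i<m'. Const (D' i j) * (mon (e' i) - nfm q' m' D' (e' i))) \<in> ideal_gen S (Gs q' m' D')"
        using IH by (intro ideal_sum ideal_Const_mult) auto
    qed
    finally show ?thesis .
  qed
qed

lemma p_nf_ideal:
  assumes q: "2 \<le> q" and p: "vars_in S p" and m: "{..<m} \<subseteq> S"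
  shows "p - nf q m D p \<in> ideal_gen S (Gs q m D)"
proof -
  have "p - nf q m D p = (\<Sum>e\<in>ks p. Const (lk p e) * (mon e - nfm q m D e))"
    by (subst (1) poly_expand) (simp add: nf_def ext_def single_Const_mon right_diff_distrib sum_subtractf)
  also have "\<dots> \<in> ideal_gen S (Gs q m D)"
    using p by (intro ideal_sum ideal_Const_mult mon_nfm_ideal[OF q _ m]) (auto simp: vars_in_def)
  finally show ?thesis .
qed

lemma nf_red_id:
  assumes "\<forall>\<mu>\<in>ks p. reduced q m \<mu>"
  shows "nf q m D p = p"
proof -
  have "nf q m D p = (\<Sum>e\<in>ks p. Const (lk p e) * mon e)"
    unfolding nf_def ext_def using assms by (intro sum.cong refl) (simp add: nfm_red)
  also have "\<dots> = p" by (subst (2) poly_expand) (simp add: single_Const_mon)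
  finally show ?thesis .
qed

lemma nf_keys:
  assumes q: "2 \<le> q" and mu: "\<mu> \<in> ks (nf q m D p)"
  shows "reduced q m \<mu> \<and> (\<exists>e\<in>ks p. ks \<mu> \<subseteq> ks e \<union> {..<m})"
proof -
  have "\<mu> \<in> (\<Union>e\<in>ks p. ks (Const (lk p e) * nfm q m D e))"
    using mu unfolding nf_def ext_def by (rule subsetD[OF keys_sum])
  then obtain e where e: "e \<in> ks p" "\<mu> \<in> ks (Const (lk p e) * nfm q m D e)" by blast
  have "\<mu> \<in> ks (nfm q m D e)" using e(2) by (rule subsetD[OF keys_Const_mult])
  hence "reduced q m \<mu> \<and> ks \<mu> \<subseteq> ks e \<union> {..<m}" using subsetD[OF keys_nfm[OF q]] by simp
  thus ?thesis using e(1) by blast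
qed

lemma nf_vars:
  assumes q: "2 \<le> q" and p: "vars_in S p" and m: "{..<m} \<subseteq> S"
  shows "vars_in S (nf q m D p)"
  unfolding vars_in_def
proof
  fix \<mu> assume "\<mu> \<in> ks (nf q m D p)"
  then obtain e where "e \<in> ks p" "ks \<mu> \<subseteq> ks e \<union> {..<m}" using nf_keys[OF q] by blast
  thus "ks \<mu> \<subseteq> S" using p m by (auto simp: vars_in_def)
qed

lemma nf_reduced:
  assumes q: "2 \<le> q" shows "\<forall>\<mu>\<in>ks (nf q m D p). reduced q m \<mu>"
  using nf_keys[OF q] by blast

lemma red_unique:
  assumes q: "2 \<le> q" and a: "\<forall>\<mu>\<in>ks a. reduced q m \<mu>" and b: "\<forall>\<mu>\<in>ks b. reduced q m \<mu>"
    and ab: "a - b \<in> ideal_gen S (Gs q m D)"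
  shows "a = b"
proof -
  have "nf q m D (a - b) = 0" by (rule nf_kill_ideal[OF q ab])
  thus ?thesis by (simp add: nf_diff nf_red_id[OF a] nf_red_id[OF b])
qed

definition gsh :: "nat \<Rightarrow> nat \<Rightarrow> (nat \<Rightarrow> nat \<Rightarrow> 'k::comm_ring_1) \<Rightarrow> nat \<Rightarrow> nat \<Rightarrow> 'k mpoly" where
  "gsh q n C off j = Var (off + j) ^ q - (\<Sum>i<n. Const (C i j) * Var (off + i))"

definition D2 :: "nat \<Rightarrow> (nat \<Rightarrow> nat \<Rightarrow> 'k::comm_ring_1) \<Rightarrow> nat \<Rightarrow> nat \<Rightarrow> 'k" where
  "D2 n C i j = (if i < n \<and> j < n then C i j else if n \<le> i \<and> i < 2*n \<and> n \<le> j \<and> j < 2*n then C (i-n) (j-n) else 0)"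

lemma sum_split_add: "(\<Sum>i<a+b. f i) = (\<Sum>i<a. f i) + (\<Sum>i<b. f (a+i))" for a b :: nat
  by (induction b) (simp_all add: add.assoc)

lemma sum_split_2n: "(\<Sum>i<2*n. f i) = (\<Sum>i<n. f i) + (\<Sum>i<n. f (n+i))" for n :: nat
  using sum_split_add[of f n n] by (simp add: mult_2)

lemma gen_gsh: "gen q n C j = gsh q n C 0 j"
  by (simp add: gen_def gsh_def)

lemma gen2_lo: "j < n \<Longrightarrow> gen q (2*n) (D2 n C) j = gsh q n C 0 j"
  by (simp add: gen_def gsh_def sum_split_2n D2_def)

lemma gen2_hi: "j < n \<Longrightarrow> gen q (2*n) (D2 n C) (n + j) = gsh q n C n j"
  by (simp add: gen_def gsh_def sum_split_2n D2_def)

lemma elemM_pow: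
  assumes "prime p" "of_nat p = (0::'k::field)"
  shows "elemM n off a ^ (p^r) = (\<Sum>j<n. Const (a j ^ (p^r)) * Var (off + j) ^ (p^r) :: 'k mpoly)"
proof -
  have "elemM n off a ^ (p^r) = (\<Sum>j<n. (Const (a j) * Var (off+j))^(p^r) :: 'k mpoly)"
    unfolding elemM_def by (rule frob_mpoly_sum[OF assms])
  also have "\<dots> = (\<Sum>j<n. Const (a j ^ (p^r)) * Var (off + j) ^ (p^r) :: 'k mpoly)"
    by (intro sum.cong refl) (simp only: power_mult_distrib Const_power)
  finally show ?thesis .
qed

lemma rels_form:
  fixes C :: "nat \<Rightarrow> nat \<Rightarrow> 'k::field"
  assumes "prime p" "of_nat p = (0::'k)" "x \<in> rels (p^r) n v C off"
  shows "\<exists>a. x = - (\<Sum>j<n. Const (a j ^ (p^r)) * gsh (p^r) n C off j)"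
proof -
  obtain a where x: "x = PhiM (p^r) n C off a - elemM n off a ^ (p^r)" using assms(3) by (auto simp: rels_def)
  have "x = - (\<Sum>j<n. Const (a j ^ (p^r)) * gsh (p^r) n C off j)"
    unfolding x elemM_pow[OF assms(1,2)] unfolding PhiM_def gsh_def elemM_def
    by (simp add: right_diff_distrib sum_subtractf)
  thus ?thesis by blast
qed

lemma rels_sub:
  fixes C :: "nat \<Rightarrow> nat \<Rightarrow> 'k::field"
  assumes "prime p" "of_nat p = (0::'k::field)" "\<And>j. j < n \<Longrightarrow> gsh (p^r) n C off j \<in> ideal_gen S G"
  shows "rels (p^r) n v C off \<subseteq> ideal_gen S G"
proof
  fix x assume "x \<in> rels (p^r) n v C off"
  then obtain a where x: "x = - (\<Sum>j<n. Const (a j ^ (p^r)) * gsh (p^r) n C off j)"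
    using rels_form[OF assms(1,2)] by blast
  show "x \<in> ideal_gen S G" unfolding x using assms(3)
    by (intro ideal_uminus ideal_sum ideal_Const_mult) auto
qed

lemma gen_in_ideal: "j < m \<Longrightarrow> gen q m D j \<in> ideal_gen S (Gs q m D)"
  using ideal_gen_mem[of "gen q m D j" "Gs q m D" S 1] by (auto simp: Gs_def)

lemma elemM_delta: "j < n \<Longrightarrow> elemM n off (\<lambda>i. if i = j then 1 else 0) = (Var (off + j) :: 'k::comm_ring_1 mpoly)"
proof -
  assume j: "j < n"
  have "elemM n off (\<lambda>i. if i = j then 1 else 0) = (\<Sum>ja<n. if ja = j then Var (off + ja) else (0 :: 'k mpoly))"
    unfolding elemM_def by (rule sum.cong) auto
  thus ?thesis using j by simp
qed

lemma gsh_in_rels: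
  fixes C :: "nat \<Rightarrow> nat \<Rightarrow> 'k::field"
  assumes d: "discrete_valuation v" and j: "j < n" and q: "0 < q"
  shows "- gsh q n C off j \<in> rels q n v C off"
proof -
  let ?a = "\<lambda>i. if i = j then 1 else (0::'k)"
  have "PhiM q n C off ?a = (\<Sum>ja<n. if ja = j then elemM n off (\<lambda>i. C i ja) else 0)"
    unfolding PhiM_def using q by (intro sum.cong) (auto simp: power_0_left)
  hence 1: "PhiM q n C off ?a = elemM n off (\<lambda>i. C i j)" using j by simp
  have 2: "elemM n off ?a ^ q = Var (off + j) ^ q" by (subst elemM_delta[OF j]) (rule refl)
  have "- gsh q n C off j = PhiM q n C off ?a - elemM n off ?a ^ q"
    unfolding 1 2 unfolding gsh_def elemM_def by simp
  moreover have "\<forall>i. ?a i \<in> val_ring v" using vr_one[OF d] by simp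
  ultimately show ?thesis unfolding rels_def by blast
qed

lemma gsh_in_ideal:
  fixes C :: "nat \<Rightarrow> nat \<Rightarrow> 'k::field"
  assumes d: "discrete_valuation v" and j: "j < n" and q: "0 < q"
  shows "gsh q n C off j \<in> ideal_gen S (rels q n v C off)"
  using ideal_uminus[OF ideal_gen_mem[OF gsh_in_rels[OF d j q], of S 1]] by simp

context
  fixes p r n :: nat and C :: "nat \<Rightarrow> nat \<Rightarrow> 'k::field" and v :: "'k \<Rightarrow> int"
  assumes pr: "prime p" and ch: "of_nat p = (0::'k)" and r1: "1 \<le> r"
begin

lemma q_ge2: "2 \<le> p ^ r"
proof -
  have "2 \<le> p" using pr by (simp add: prime_ge_2_nat)
  moreover have "p ^ 1 \<le> p ^ r" using \<open>2 \<le> p\<close> by (intro power_increasing[OF r1]) simp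
  ultimately show ?thesis by simp
qed

lemma q_pos: "0 < p ^ r" using q_ge2 by linarith

lemma idealA_sub: "x \<in> idealA (p^r) n v C \<Longrightarrow> x \<in> ideal_gen {..<n} (Gs (p^r) n C)"
  unfolding idealA_def
  by (rule ideal_trans[OF rels_sub[OF pr ch]]) (simp_all add: gen_gsh[symmetric] gen_in_ideal)

lemma idealAA_sub:
  assumes x: "x \<in> idealAA (p^r) n v C"
  shows "x \<in> ideal_gen {..<2*n} (Gs (p^r) (2*n) (D2 n C))"
proof (rule ideal_trans[OF _ x[unfolded idealAA_def]], rule Un_least)
  show "rels (p ^ r) n v C 0 \<subseteq> ideal_gen {..<2 * n} (Gs (p ^ r) (2 * n) (D2 n C))"
    by (rule rels_sub[OF pr ch]) (simp add: gen2_lo[symmetric] gen_in_ideal)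
  show "rels (p ^ r) n v C n \<subseteq> ideal_gen {..<2 * n} (Gs (p ^ r) (2 * n) (D2 n C))"
    by (rule rels_sub[OF pr ch]) (simp add: gen2_hi[symmetric] gen_in_ideal)
qed

lemma Jn_sub_idealA:
  assumes d: "discrete_valuation v" and x: "x \<in> ideal_gen {..<n} (Gs (p^r) n C)"
  shows "x \<in> idealA (p^r) n v C"
  unfolding idealA_def
proof (rule ideal_trans[OF _ x], rule subsetI)
  fix g assume "g \<in> Gs (p ^ r) n C"
  then obtain j where j: "j < n" "g = gen (p^r) n C j" by (auto simp: Gs_def)
  show "g \<in> ideal_gen {..<n} (rels (p ^ r) n v C 0)"
    unfolding j(2) gen_gsh by (rule gsh_in_ideal[OF d j(1) q_pos])
qed

lemma J2n_sub_idealAA: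
  assumes d: "discrete_valuation v" and x: "x \<in> ideal_gen {..<2*n} (Gs (p^r) (2*n) (D2 n C))"
  shows "x \<in> idealAA (p^r) n v C"
  unfolding idealAA_def
proof (rule ideal_trans[OF _ x], rule subsetI)
  fix g assume "g \<in> Gs (p ^ r) (2 * n) (D2 n C)"
  then obtain j where j: "j < 2 * n" "g = gen (p^r) (2*n) (D2 n C) j" by (auto simp: Gs_def)
  show "g \<in> ideal_gen {..<2 * n} (rels (p ^ r) n v C 0 \<union> rels (p ^ r) n v C n)"
  proof (cases "j < n")
    case True
    hence "g = gsh (p^r) n C 0 j" using j by (simp add: gen2_lo)
    moreover have "ideal_gen {..<2*n} (rels (p ^ r) n v C 0) \<subseteq> ideal_gen {..<2*n} (rels (p ^ r) n v C 0 \<union> rels (p ^ r) n v C n)"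
      by (rule ideal_mono) auto
    ultimately show ?thesis using gsh_in_ideal[OF d True q_pos] by (simp add: subsetD)
  next
    case False
    hence "g = gsh (p^r) n C n (j - n)" and jn: "j - n < n" using j gen2_hi[of "j - n" n "p^r" C] by auto
    moreover have "ideal_gen {..<2*n} (rels (p ^ r) n v C n) \<subseteq> ideal_gen {..<2*n} (rels (p ^ r) n v C 0 \<union> rels (p ^ r) n v C n)"
      by (rule ideal_mono) auto
    ultimately show ?thesis using gsh_in_ideal[OF d jn q_pos] by (simp add: subsetD)
  qed
qed

lemma Jn_sub_J2n:
  assumes x: "x \<in> ideal_gen {..<n} (Gs (p^r) n C)"
  shows "x \<in> ideal_gen {..<2*n} (Gs (p^r) (2*n) (D2 n C))"
proof (rule ideal_trans)
  have "ideal_gen {..<n} (Gs (p^r) n C) \<subseteq> ideal_gen {..<2*n} (Gs (p^r) n C)" by (rule ideal_mono) auto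
  thus "x \<in> ideal_gen {..<2*n} (Gs (p^r) n C)" using x by (rule subsetD)
  show "Gs (p^r) n C \<subseteq> ideal_gen {..<2*n} (Gs (p^r) (2*n) (D2 n C))"
  proof
    fix g assume "g \<in> Gs (p ^ r) n C"
    then obtain j where j: "j < n" "g = gen (p^r) n C j" by (auto simp: Gs_def)
    have "g = gen (p^r) (2*n) (D2 n C) j" by (simp only: j(2) gen2_lo[OF j(1)] gen_gsh[of "p^r" n C j])
    moreover have "j < 2 * n" using j by simp
    ultimately show "g \<in> ideal_gen {..<2*n} (Gs (p^r) (2*n) (D2 n C))" by (simp add: gen_in_ideal)
  qed
qed

lemma subst_gen: "subst \<sigma> (gen q n C j) = \<sigma> j ^ q - (\<Sum>i<n. Const (C i j) * \<sigma> i)"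
  by (simp add: gen_def subst_diff subst_power subst_sum subst_Const_mult)

lemma Delta_J:
  assumes x: "x \<in> ideal_gen {..<n} (Gs (p^r) n C)"
  shows "Delta n x \<in> ideal_gen {..<2*n} (Gs (p^r) (2*n) (D2 n C))"
  unfolding Delta_def
proof (rule ideal_subst[OF _ _ x])
  fix i assume "i \<in> {..<n}"
  thus "vars_in {..<2 * n} (if i < n then Var i + Var (n + i) else Var i)"
    by (auto intro!: vars_in_add vars_in_Var)
next
  fix g assume "g \<in> Gs (p ^ r) n C"
  then obtain j where j: "j < n" "g = gen (p^r) n C j" by (auto simp: Gs_def)
  have "subst (\<lambda>i. if i < n then Var i + Var (n + i) else Var i) g = gsh (p^r) n C 0 j + gsh (p^r) n C n j"
    unfolding j(2) subst_gen gsh_def using j(1)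
    by (simp add: frob_mpoly_add[OF pr ch] distrib_left sum.distrib)
  also have "\<dots> \<in> ideal_gen {..<2*n} (Gs (p^r) (2*n) (D2 n C))"
    using j(1) by (intro ideal_add) (simp_all add: gen2_lo[symmetric] gen2_hi[symmetric] gen_in_ideal)
  finally show "subst (\<lambda>i. if i < n then Var i + Var (n + i) else Var i) g \<in> ideal_gen {..<2 * n} (Gs (p ^ r) (2 * n) (D2 n C))" .
qed

lemma one_tensor_J:
  assumes x: "x \<in> ideal_gen {..<n} (Gs (p^r) n C)"
  shows "one_tensor n x \<in> ideal_gen {..<2*n} (Gs (p^r) (2*n) (D2 n C))"
  unfolding one_tensor_def
proof (rule ideal_subst[OF _ _ x])
  fix i assume "i \<in> {..<n}"
  thus "vars_in {..<2 * n} (Var (n + i))" by (auto intro!: vars_in_Var)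
next
  fix g assume "g \<in> Gs (p ^ r) n C"
  then obtain j where j: "j < n" "g = gen (p^r) n C j" by (auto simp: Gs_def)
  have "subst (\<lambda>i. Var (n + i)) g = gsh (p^r) n C n j"
    unfolding j(2) subst_gen gsh_def by simp
  also have "\<dots> \<in> ideal_gen {..<2*n} (Gs (p^r) (2*n) (D2 n C))"
    using j(1) by (simp add: gen2_hi[symmetric] gen_in_ideal)
  finally show "subst (\<lambda>i. Var (n + i)) g \<in> ideal_gen {..<2 * n} (Gs (p ^ r) (2 * n) (D2 n C))" .
qed

lemma scal_J:
  assumes x: "x \<in> ideal_gen {..<n} (Gs (p^r) n C)" and al: "\<alpha> ^ (p^r) = \<alpha>"
  shows "scal_act \<alpha> x \<in> ideal_gen {..<n} (Gs (p^r) n C)"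
  unfolding scal_act_def
proof (rule ideal_subst[OF _ _ x])
  fix i assume "i \<in> {..<n}"
  thus "vars_in {..<n} (Const \<alpha> * Var i)" by (auto intro!: vars_in_mult vars_in_Var)
next
  fix g assume "g \<in> Gs (p ^ r) n C"
  then obtain j where j: "j < n" "g = gen (p^r) n C j" by (auto simp: Gs_def)
  have "subst (\<lambda>i. Const \<alpha> * Var i) g = Const \<alpha> * gen (p^r) n C j"
    unfolding j(2) subst_gen
    by (simp add: gen_def power_mult_distrib Const_power[symmetric] al right_diff_distrib sum_distrib_left mult_ac)
  also have "\<dots> \<in> ideal_gen {..<n} (Gs (p^r) n C)"
    using j(1) by (intro ideal_Const_mult gen_in_ideal)
  finally show "subst (\<lambda>i. Const \<alpha> * Var i) g \<in> ideal_gen {..<n} (Gs (p^r) n C)" .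
qed

lemma dplus_ideal:
  assumes d: "discrete_valuation v" and x: "x \<in> ideal_gen {..<n} (Gs (p^r) n C)"
  shows "delta_plus n x \<in> idealAA (p^r) n v C"
  unfolding delta_plus_def
  by (intro J2n_sub_idealAA[OF d] ideal_diff Delta_J one_tensor_J Jn_sub_J2n x)

end

lemma dplus_diff: "delta_plus n (x - y) = delta_plus n x - delta_plus n y"
  by (simp add: delta_plus_def Delta_def one_tensor_def subst_diff)

lemma dplus_elemM: "delta_plus n (elemM n 0 c) = 0"
  by (simp add: delta_plus_def Delta_def one_tensor_def elemM_def subst_sum subst_Const_mult
      distrib_left sum.distrib)

lemma lk_mult_Var: "lk (P * Var j) \<mu> = (if 0 < lk \<mu> j then lk P (\<mu> - sg j 1) else 0)"
proof -
  have "P * Var j = (\<Sum>e\<in>ks P. Poly_Mapping.single (e + sg j 1) (lk P e))"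
    by (subst poly_expand[of P]) (simp add: sum_distrib_right Var_def mult_single)
  hence L: "lk (P * Var j) \<mu> = (\<Sum>e\<in>ks P. if e + sg j 1 = \<mu> then lk P e else 0)"
    by (simp add: lookup_sum lookup_single when_def)
  show ?thesis
  proof (cases "0 < lk \<mu> j")
    case True
    have iff: "e + sg j 1 = \<mu> \<longleftrightarrow> e = \<mu> - sg j 1" for e
    proof
      assume "e + sg j 1 = \<mu>" thus "e = \<mu> - sg j 1" by auto
    next
      assume "e = \<mu> - sg j 1" thus "e + sg j 1 = \<mu>" using sub_add_back[of 1 \<mu> j] True by simp
    qed
    have "lk (P * Var j) \<mu> = (\<Sum>e\<in>ks P. if e = \<mu> - sg j 1 then lk P e else 0)"
      unfolding L iff ..
    also have "\<dots> = lk P (\<mu> - sg j 1)" by (simp add: in_keys_iff)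
    finally show ?thesis using True by simp
  next
    case False
    have "e + sg j 1 \<noteq> \<mu>" for e
    proof
      assume "e + sg j 1 = \<mu>"
      hence "lk (e + sg j 1) j = lk \<mu> j" by simp
      thus False using False by (simp add: lookup_add)
    qed
    thus ?thesis unfolding L using False by simp
  qed
qed

definition Cnd :: "nat \<Rightarrow> (nat \<Rightarrow>\<^sub>0 nat) \<Rightarrow> (nat \<Rightarrow>\<^sub>0 nat) \<Rightarrow> bool" where
  "Cnd n e \<mu> \<longleftrightarrow> (\<forall>i<n. lk \<mu> i + lk \<mu> (n+i) = lk e i) \<and> (\<forall>j. 2*n \<le> j \<longrightarrow> lk \<mu> j = 0)"

definition Vb :: "nat \<Rightarrow> (nat \<Rightarrow>\<^sub>0 nat) \<Rightarrow> (nat \<Rightarrow>\<^sub>0 nat) \<Rightarrow> nat" where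
  "Vb n e \<mu> = (\<Prod>i<n. lk e i choose lk \<mu> i)"

definition sD :: "nat \<Rightarrow> nat \<Rightarrow> 'k::comm_ring_1 mpoly" where
  "sD n i = (if i < n then Var i + Var (n + i) else Var i)"

lemma Delta_sD: "Delta n x = subst (sD n) x"
  unfolding Delta_def sD_def[abs_def] by (rule refl)

lemma Cnd_zero: "Cnd n 0 \<mu> \<longleftrightarrow> \<mu> = 0"
proof
  assume c: "Cnd n 0 \<mu>"
  show "\<mu> = 0"
  proof (rule poly_mapping_eqI)
    fix j
    show "lk \<mu> j = lk 0 j"
    proof (cases "j < n")
      case True thus ?thesis using c by (auto simp: Cnd_def)
    next
      case False
      show ?thesis
      proof (cases "j < 2 * n")
        case True
        hence "j - n < n" "n + (j - n) = j" using False by auto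
        thus ?thesis using c by (auto simp: Cnd_def)
      next
        case False thus ?thesis using c by (auto simp: Cnd_def)
      qed
    qed
  qed
qed (simp add: Cnd_def)

lemma Delta_mon_lk:
  fixes e :: "nat \<Rightarrow>\<^sub>0 nat"
  assumes "ks e \<subseteq> {..<n}"
  shows "lk (mm (sD n) e :: 'k::comm_ring_1 mpoly) \<mu> = (if Cnd n e \<mu> then of_nat (Vb n e \<mu>) else 0)"
  using assms
proof (induction "tdeg e" arbitrary: e \<mu> rule: less_induct)
  case less
  show ?case
  proof (cases "e = 0")
    case True
    have "Vb n 0 0 = 1" by (simp add: Vb_def)
    thus ?thesis using True by (simp add: Cnd_zero lookup_one when_def)
  next
    case False
    then obtain k where k: "k \<in> ks e" by fastforce
    have kn: "k < n" using k less.prems by auto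
    have ek: "0 < lk e k" using k by (simp add: in_keys_iff)
    define e' where "e' = e - sg k 1"
    have ee: "e = e' + sg k 1" using sub_add_back[of 1 e k] ek by (simp add: e'_def)
    have td: "tdeg e' < tdeg e" using tdeg_add[of e' "sg k 1"] ee by simp
    have ks': "ks e' \<subseteq> {..<n}" using ks_sub[of e k 1] less.prems by (auto simp: e'_def)
    have IH: "lk (mm (sD n) e' :: 'k mpoly) \<nu> = (if Cnd n e' \<nu> then of_nat (Vb n e' \<nu>) else 0)" for \<nu>
      using less.hyps[OF td ks'] by simp
    have "mm (sD n) e = mm (sD n) e' * (Var k + Var (n+k) :: 'k mpoly)"
      by (subst ee) (simp add: mm_add mm_single sD_def kn)
    hence L: "lk (mm (sD n) e :: 'k mpoly) \<mu> =
        (if 0 < lk \<mu> k then lk (mm (sD n) e' :: 'k mpoly) (\<mu> - sg k 1) else 0) +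
        (if 0 < lk \<mu> (n+k) then lk (mm (sD n) e' :: 'k mpoly) (\<mu> - sg (n+k) 1) else 0)"
      by (simp only: distrib_left lookup_add lk_mult_Var)
    have lke': "lk e' x = lk e x - (if x = k then 1 else 0)" for x
      by (simp add: e'_def lookup_minus lk_sg)
    have C1: "Cnd n e' (\<mu> - sg k 1) \<longleftrightarrow> Cnd n e \<mu>" if pos: "0 < lk \<mu> k"
    proof -
      have A: "(lk (\<mu> - sg k 1) x + lk (\<mu> - sg k 1) (n+x) = lk e' x) \<longleftrightarrow> (lk \<mu> x + lk \<mu> (n+x) = lk e x)" if "x < n" for x
        using that pos ek kn by (cases "x = k") (auto simp: lke' lookup_minus lk_sg)
      have B: "lk (\<mu> - sg k 1) j = lk \<mu> j" if "2*n \<le> j" for j using that kn by (simp add: lookup_minus lk_sg)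
      show ?thesis unfolding Cnd_def using A B by auto
    qed
    have C2: "Cnd n e' (\<mu> - sg (n+k) 1) \<longleftrightarrow> Cnd n e \<mu>" if pos: "0 < lk \<mu> (n+k)"
    proof -
      have A: "(lk (\<mu> - sg (n+k) 1) x + lk (\<mu> - sg (n+k) 1) (n+x) = lk e' x) \<longleftrightarrow> (lk \<mu> x + lk \<mu> (n+x) = lk e x)" if "x < n" for x
        using that pos ek kn by (cases "x = k") (auto simp: lke' lookup_minus lk_sg)
      have B: "lk (\<mu> - sg (n+k) 1) j = lk \<mu> j" if "2*n \<le> j" for j using that kn by (simp add: lookup_minus lk_sg)
      show ?thesis unfolding Cnd_def using A B by auto
    qed
    define W where "W = (\<Prod>x\<in>{..<n}-{k}. lk e x choose lk \<mu> x)"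
    have V0: "Vb n e \<mu> = (lk e k choose lk \<mu> k) * W"
      unfolding Vb_def W_def using kn by (simp add: prod.remove)
    have V1: "Vb n e' (\<mu> - sg k 1) = (lk e k - 1 choose (lk \<mu> k - 1)) * W"
    proof -
      have "Vb n e' (\<mu> - sg k 1) = (lk e' k choose lk (\<mu> - sg k 1) k) * (\<Prod>x\<in>{..<n}-{k}. lk e' x choose lk (\<mu> - sg k 1) x)"
        unfolding Vb_def using kn by (simp add: prod.remove)
      also have "(\<Prod>x\<in>{..<n}-{k}. lk e' x choose lk (\<mu> - sg k 1) x) = W"
        unfolding W_def by (intro prod.cong refl) (simp add: lke' lookup_minus lk_sg)
      finally show ?thesis by (simp add: lke' lookup_minus lk_sg)
    qed
    have V2: "Vb n e' (\<mu> - sg (n+k) 1) = (lk e k - 1 choose lk \<mu> k) * W"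
    proof -
      have "Vb n e' (\<mu> - sg (n+k) 1) = (lk e' k choose lk (\<mu> - sg (n+k) 1) k) * (\<Prod>x\<in>{..<n}-{k}. lk e' x choose lk (\<mu> - sg (n+k) 1) x)"
        unfolding Vb_def using kn by (simp add: prod.remove)
      also have "(\<Prod>x\<in>{..<n}-{k}. lk e' x choose lk (\<mu> - sg (n+k) 1) x) = W"
        unfolding W_def by (intro prod.cong refl) (simp add: lke' lookup_minus lk_sg)
      finally show ?thesis using kn by (simp add: lke' lookup_minus lk_sg)
    qed
    show ?thesis
    proof (cases "Cnd n e \<mu>")
      case False
      thus ?thesis unfolding L IH using C1 C2 by auto
    next
      case True
      hence sum: "lk \<mu> k + lk \<mu> (n+k) = lk e k" using kn by (simp add: Cnd_def)
      show ?thesis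
      proof (cases "lk \<mu> k = 0")
        case z: True
        hence p2: "0 < lk \<mu> (n+k)" using sum ek by simp
        have "lk (mm (sD n) e :: 'k mpoly) \<mu> = of_nat (Vb n e' (\<mu> - sg (n+k) 1))"
          unfolding L IH using z C2[OF p2] True p2 by simp
        also have "\<dots> = of_nat (Vb n e \<mu>)" unfolding V2 V0 using z by simp
        finally show ?thesis using True by simp
      next
        case nz: False
        show ?thesis
        proof (cases "lk \<mu> (n+k) = 0")
          case z2: True
          have "lk (mm (sD n) e :: 'k mpoly) \<mu> = of_nat (Vb n e' (\<mu> - sg k 1))"
          proof -
            have c1: "Cnd n e' (\<mu> - sg k 1)" using C1 nz True by simp
            show ?thesis unfolding L IH using nz z2 c1 by simp
          qed
          also have "\<dots> = of_nat (Vb n e \<mu>)" unfolding V1 V0 using z2 sum by simp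
          finally show ?thesis using True by simp
        next
          case nz2: False
          have "lk (mm (sD n) e :: 'k mpoly) \<mu> = of_nat (Vb n e' (\<mu> - sg k 1)) + of_nat (Vb n e' (\<mu> - sg (n+k) 1))"
          proof -
            have c1: "Cnd n e' (\<mu> - sg k 1)" using C1 nz True by simp
            have c2: "Cnd n e' (\<mu> - sg (n+k) 1)" using C2 nz2 True by simp
            show ?thesis unfolding L IH using nz nz2 c1 c2 by simp
          qed
          also have "\<dots> = of_nat (Vb n e \<mu>)"
          proof -
            obtain a where a: "lk e k = Suc a" using ek by (cases "lk e k") auto
            obtain b where b: "lk \<mu> k = Suc b" using nz by (cases "lk \<mu> k") auto
            have "Vb n e' (\<mu> - sg k 1) + Vb n e' (\<mu> - sg (n+k) 1) = Vb n e \<mu>"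
              unfolding V0 V1 V2 a b by (simp add: distrib_right[symmetric])
            thus ?thesis by (metis of_nat_add)
          qed
          finally show ?thesis using True by simp
        qed
      qed
    qed
  qed
qed

definition shn :: "nat \<Rightarrow> (nat \<Rightarrow>\<^sub>0 nat) \<Rightarrow> (nat \<Rightarrow>\<^sub>0 nat)" where
  "shn n g = (\<Sum>j\<in>ks g. sg (n + j) (lk g j))"

lemma lk_shn: "lk (shn n g) x = (if n \<le> x then lk g (x - n) else 0)"
proof -
  have "lk (shn n g) x = (\<Sum>j\<in>ks g. if j = x - n \<and> n \<le> x then lk g j else 0)"
    unfolding shn_def lookup_sum by (intro sum.cong refl) (auto simp: lk_sg)
  also have "\<dots> = (if n \<le> x then lk g (x - n) else 0)"
    by (cases "n \<le> x") (simp_all add: in_keys_iff)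
  finally show ?thesis .
qed

lemma Delta_ext: "Delta n r = (\<Sum>e\<in>ks r. Const (lk r e) * mm (sD n) e)"
  by (simp add: Delta_sD subst_ext ext_def)

lemma dplus_lk:
  fixes r :: "'k::comm_ring_1 mpoly"
  assumes r: "vars_in {..<n} r" and e: "ks e \<subseteq> {..<n}" and i: "i < n" "0 < s" "s \<le> lk e i"
    and y: "e \<noteq> sg i s"
  shows "lk (delta_plus n r) (sg i s + shn n (e - sg i s)) = lk r e * of_nat (lk e i choose s)"
proof -
  define \<mu> where "\<mu> = sg i s + shn n (e - sg i s)"
  have lkmu: "lk \<mu> x = (if x = i then s else 0) + (if n \<le> x then lk e (x - n) - (if x - n = i then s else 0) else 0)" for x
    by (simp add: \<mu>_def lookup_add lk_sg lk_shn lookup_minus)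
  have "e - sg i s \<noteq> 0"
  proof
    assume "e - sg i s = 0"
    hence "e = sg i s" using sub_add_back[OF i(3)] by simp
    thus False using y by simp
  qed
  then obtain j where j: "lk (e - sg i s) j \<noteq> 0" by (metis lookup_zero poly_mapping_eqI)
  hence "j \<in> ks e" by (auto simp: in_keys_iff lookup_minus)
  hence jn: "j < n" using e by auto
  have muj: "lk \<mu> (n + j) \<noteq> 0" using j i(1) by (simp add: lkmu lookup_minus lk_sg)
  have mui: "lk \<mu> i \<noteq> 0" using i by (simp add: lkmu)
  have r0: "lk r \<mu> = 0"
  proof (rule ccontr)
    assume "lk r \<mu> \<noteq> 0"
    hence "\<mu> \<in> ks r" by (simp add: in_keys_iff)
    hence "ks \<mu> \<subseteq> {..<n}" using r by (auto simp: vars_in_def)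
    moreover have "n + j \<in> ks \<mu>" using muj by (simp add: in_keys_iff)
    ultimately show False by auto
  qed
  have ot: "vars_in {n..<2*n} (one_tensor n r)"
    unfolding one_tensor_def by (rule vars_in_subst[OF r]) (auto intro: vars_in_Var)
  have o0: "lk (one_tensor n r) \<mu> = 0"
  proof (rule ccontr)
    assume "lk (one_tensor n r) \<mu> \<noteq> 0"
    hence "\<mu> \<in> ks (one_tensor n r)" by (simp add: in_keys_iff)
    hence "ks \<mu> \<subseteq> {n..<2*n}" using ot by (auto simp: vars_in_def)
    moreover have "i \<in> ks \<mu>" using mui by (simp add: in_keys_iff)
    ultimately show False using i by auto
  qed
  have cnd: "Cnd n e' \<mu> \<longleftrightarrow> e' = e" if e': "ks e' \<subseteq> {..<n}" for e'
  proof
    assume c: "Cnd n e' \<mu>"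
    show "e' = e"
    proof (rule poly_mapping_eqI)
      fix x show "lk e' x = lk e x"
      proof (cases "x < n")
        case True
        hence "lk \<mu> x + lk \<mu> (n + x) = lk e' x" using c by (simp add: Cnd_def)
        thus ?thesis using True i by (auto simp: lkmu)
      next
        case False
        hence "x \<notin> ks e'" "x \<notin> ks e" using e e' by auto
        thus ?thesis by (simp add: in_keys_iff)
      qed
    qed
  next
    assume "e' = e"
    show "Cnd n e' \<mu>" unfolding Cnd_def
    proof (intro conjI allI impI)
      fix x assume "x < n" thus "lk \<mu> x + lk \<mu> (n + x) = lk e' x"
        using i \<open>e' = e\<close> by (auto simp: lkmu)
    next
      fix x assume x: "2 * n \<le> x"
      hence "x - n \<notin> ks e" using e by auto
      thus "lk \<mu> x = 0" using x i by (auto simp: lkmu in_keys_iff)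
    qed
  qed
  have vb: "Vb n e \<mu> = lk e i choose s"
  proof -
    have "Vb n e \<mu> = (lk e i choose lk \<mu> i) * (\<Prod>x\<in>{..<n}-{i}. lk e x choose lk \<mu> x)"
      unfolding Vb_def using i by (simp add: prod.remove)
    also have "(\<Prod>x\<in>{..<n}-{i}. lk e x choose lk \<mu> x) = 1"
      by (intro prod.neutral) (auto simp: lkmu)
    finally show ?thesis using i by (simp add: lkmu)
  qed
  have "lk (Delta n r) \<mu> = (\<Sum>e'\<in>ks r. lk r e' * lk (mm (sD n) e' :: 'k mpoly) \<mu>)"
    by (simp add: Delta_ext lookup_sum lookup_Const_mult)
  also have "\<dots> = (\<Sum>e'\<in>ks r. if e' = e then lk r e * of_nat (lk e i choose s) else 0)"
  proof (intro sum.cong refl)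
    fix e' assume "e' \<in> ks r"
    hence ks': "ks e' \<subseteq> {..<n}" using r by (auto simp: vars_in_def)
    show "lk r e' * lk (mm (sD n) e' :: 'k mpoly) \<mu> = (if e' = e then lk r e * of_nat (lk e i choose s) else 0)"
      using Delta_mon_lk[OF ks', of \<mu>, where 'k='k] cnd[OF ks'] vb by auto
  qed
  also have "\<dots> = lk r e * of_nat (lk e i choose s)"
    by (simp add: in_keys_iff)
  finally show ?thesis
    unfolding delta_plus_def \<mu>_def[symmetric] by (simp add: lookup_minus r0 o0)
qed

lemma CHAR_field':
  assumes "prime p" "of_nat p = (0::'k::field)"
  shows "CHAR('k) = p"
proof -
  have "CHAR('k) dvd p" using assms(2) by (simp add: of_nat_eq_0_iff_char_dvd)
  moreover have "CHAR('k) \<noteq> 1"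
  proof
    assume "CHAR('k) = 1"
    hence "of_nat 1 = (0::'k)" using of_nat_CHAR[where 'a='k] by simp
    thus False by simp
  qed
  moreover have "\<forall>m. m dvd p \<longrightarrow> m = 1 \<or> m = p" using assms(1) unfolding prime_nat_iff by blast
  ultimately show ?thesis by blast
qed

lemma X_pow: "([:0, 1:] :: 'a::comm_semiring_1 poly) ^ d = monom 1 d"
  by (simp add: monom_altdef)

lemma binom_ppow:
  assumes pr: "prime p" and ch: "of_nat p = (0::'k::field)" and u: "1 \<le> u"
  shows "(of_nat (p ^ v * u choose p ^ v) :: 'k) = of_nat u"
proof -
  let ?d = "p ^ v"
  have d0: "0 < ?d" using pr by (simp add: prime_gt_0_nat)
  have chp: "CHAR('k poly) = p" using CHAR_field'[OF pr ch] by simp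
  have "([:1, 1:] :: 'k poly) ^ ?d = (1 + [:0, 1:]) ^ ?d" by (simp add: one_pCons)
  also have "\<dots> = 1 ^ ?d + [:0, 1:] ^ ?d"
    by (rule freshmans_dream') (simp_all add: CHAR_field'[OF pr ch] pr)
  also have "\<dots> = 1 + monom 1 ?d" by (simp add: X_pow)
  finally have 1: "([:1, 1:] :: 'k poly) ^ (?d * u) = (monom 1 ?d + 1) ^ u"
    by (simp add: power_mult add.commute)
  have "(monom 1 ?d + 1 :: 'k poly) ^ u = (\<Sum>k\<le>u. of_nat (u choose k) * monom 1 ?d ^ k * 1 ^ (u - k))"
    by (rule binomial_ring)
  also have "\<dots> = (\<Sum>k\<le>u. monom (of_nat (u choose k)) (?d * k))"
    by (intro sum.cong refl) (simp add: monom_power of_nat_poly smult_monom)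
  finally have 2: "coeff ((monom 1 ?d + 1 :: 'k poly) ^ u) ?d = (\<Sum>k\<le>u. if ?d * k = ?d then of_nat (u choose k) else 0)"
    by (simp add: coeff_sum)
  also have "\<dots> = (\<Sum>k\<le>u. if k = 1 then of_nat (u choose k) else 0)"
  proof (intro sum.cong refl)
    fix k assume "k \<in> {..u}"
    have "?d * k = ?d \<longleftrightarrow> k = 1" using d0 by (metis mult.right_neutral mult_left_cancel neq0_conv)
    thus "(if ?d * k = ?d then of_nat (u choose k) else 0) = (if k = 1 then of_nat (u choose k) else (0::'k))" by simp
  qed
  also have "\<dots> = of_nat u" using u by simp
  finally have 3: "coeff ((monom 1 ?d + 1 :: 'k poly) ^ u) ?d = of_nat u" .
  have "coeff ([:1, 1:] ^ (?d * u) :: 'k poly) ?d = of_nat (?d * u choose ?d)"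
    using u by (subst coeff_linear_poly_power) simp_all
  thus ?thesis using 1 3 by (simp add: mult.commute)
qed

lemma binom_nonzero:
  assumes pr: "prime p" and ch: "of_nat p = (0::'k::field)" and t: "1 \<le> t" and np: "\<forall>k. t \<noteq> p ^ k"
  shows "\<exists>s. 0 < s \<and> s < t \<and> (of_nat (t choose s) :: 'k) \<noteq> 0"
proof -
  have "t \<noteq> 0" using t by simp
  moreover have "\<not> is_unit p" using pr by (simp add: prime_nat_iff)
  ultimately obtain u where tu: "t = p ^ multiplicity p t * u" "\<not> p dvd u"
    by (metis multiplicity_decompose')
  define v where "v = multiplicity p t"
  have tu': "t = p ^ v * u" using tu by (simp add: v_def)
  have u1: "1 \<le> u" using t tu' by (cases u) auto
  have "u \<noteq> 1" using np tu' by auto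
  hence u2: "2 \<le> u" using u1 by simp
  have pv: "0 < p ^ v" using pr by (simp add: prime_gt_0_nat)
  have "p ^ v * 1 < p ^ v * u" using u2 pv by (intro mult_strict_left_mono) auto
  hence lt: "p ^ v < t" using tu' by simp
  have "(of_nat (t choose p ^ v) :: 'k) = of_nat u" unfolding tu' by (rule binom_ppow[OF pr ch u1])
  moreover have "(of_nat u :: 'k) \<noteq> 0"
    using tu(2) CHAR_field'[OF pr ch] by (simp add: of_nat_eq_0_iff_char_dvd)
  ultimately show ?thesis using lt pv by metis
qed

lemma fq_witness:
  assumes card: "card {x::'k::field. x ^ q = x} = q" and d: "2 \<le> d" "d < q"
  shows "\<exists>\<alpha>::'k. \<alpha> ^ q = \<alpha> \<and> \<alpha> ^ d \<noteq> \<alpha>"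
proof (rule ccontr)
  assume "\<not> ?thesis"
  hence sub: "{x::'k. x ^ q = x} \<subseteq> {x. poly (monom 1 d - [:0, 1:]) x = 0}"
    by (auto simp: poly_monom)
  define P :: "'k poly" where "P = monom 1 d - [:0, 1:]"
  obtain k where dk: "d = Suc (Suc k)" using d by (metis add_2_eq_Suc le_Suc_ex)
  have "coeff P d = 1" by (simp add: P_def dk)
  hence P0: "P \<noteq> 0" by auto
  have "degree P \<le> max (degree (monom (1::'k) d)) (degree [:0::'k, 1:])"
    unfolding P_def by (rule degree_diff_le_max)
  hence degP: "degree P \<le> d" using d by (simp add: degree_monom_eq)
  have "q = card {x::'k. x ^ q = x}" using card by simp
  also have "\<dots> \<le> card {x. poly P x = 0}"
    using sub poly_roots_finite[OF P0] unfolding P_def by (intro card_mono) auto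
  also have "\<dots> \<le> degree P" by (rule card_poly_roots_bound[OF P0])
  finally show False using degP d by simp
qed

lemma prod_mon: "(\<Prod>i\<in>A. mon (f i) :: 'k::comm_ring_1 mpoly) = mon (\<Sum>i\<in>A. f i)"
  by (induction A rule: infinite_finite_induct) (simp_all add: mon_def mult_single)

lemma Const_prod: "Const (\<Prod>i\<in>A. f i) = (\<Prod>i\<in>A. Const (f i) :: 'k::comm_ring_1 mpoly)"
  by (induction A rule: infinite_finite_induct) (simp_all add: Const_mult)

lemma sum_sg: "(\<Sum>i\<in>ks e. sg i (lk e i)) = e"
  using poly_expand[of e] by simp

lemma mm_scal: "mm (\<lambda>i. Const \<alpha> * Var i) e = Const (\<alpha> ^ tdeg e) * (mon e :: 'k::comm_ring_1 mpoly)"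
proof -
  have "mm (\<lambda>i. Const \<alpha> * Var i) e = (\<Prod>i\<in>ks e. Const (\<alpha> ^ lk e i) * mon (sg i (lk e i)) :: 'k mpoly)"
    unfolding mm_def by (intro prod.cong refl) (simp add: power_mult_distrib Const_power Var_power)
  also have "\<dots> = Const (\<Prod>i\<in>ks e. \<alpha> ^ lk e i) * mon (\<Sum>i\<in>ks e. sg i (lk e i))"
    by (simp add: prod.distrib prod_mon Const_prod)
  also have "\<dots> = Const (\<alpha> ^ tdeg e) * mon e"
    by (simp add: sum_sg tdeg_def power_sum)
  finally show ?thesis .
qed

lemma mm_shift: "mm (\<lambda>i. Var (n + i)) e = (mon (shn n e) :: 'k::comm_ring_1 mpoly)"
proof -
  have "mm (\<lambda>i. Var (n + i)) e = (\<Prod>i\<in>ks e. mon (sg (n + i) (lk e i)) :: 'k mpoly)"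
    unfolding mm_def by (intro prod.cong refl) (simp add: Var_power)
  also have "\<dots> = mon (shn n e)" by (simp add: prod_mon shn_def)
  finally show ?thesis .
qed

lemma lk_mon: "lk (mon e :: 'k::comm_ring_1 mpoly) \<mu> = (if e = \<mu> then 1 else 0)"
  by (simp add: mon_def lookup_single when_def)

lemma lk_scal: "lk (scal_act \<alpha> r) \<mu> = \<alpha> ^ tdeg \<mu> * lk r (\<mu> :: nat \<Rightarrow>\<^sub>0 nat)"
proof -
  have "lk (scal_act \<alpha> r) \<mu> = (\<Sum>e\<in>ks r. if e = \<mu> then lk r e * \<alpha> ^ tdeg e else 0)"
    unfolding scal_act_def subst_ext ext_def lookup_sum
    by (intro sum.cong refl) (simp add: mm_scal lookup_Const_mult lk_mon mult.assoc[symmetric] Const_mult[symmetric])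
  also have "\<dots> = \<alpha> ^ tdeg \<mu> * lk r \<mu>" by (simp add: in_keys_iff mult.commute)
  finally show ?thesis .
qed

lemma keys_diff_sub: "ks (a - b :: 'k::comm_ring_1 mpoly) \<subseteq> ks a \<union> ks b"
  by (auto simp: in_keys_iff lookup_minus)

lemma keys_one_tensor:
  assumes "\<mu> \<in> ks (one_tensor n (r :: 'k::comm_ring_1 mpoly))"
  shows "\<exists>e\<in>ks r. \<mu> = shn n e"
proof -
  have "one_tensor n r = (\<Sum>e\<in>ks r. Const (lk r e) * mon (shn n e))"
    unfolding one_tensor_def subst_ext ext_def by (simp add: mm_shift)
  hence "\<mu> \<in> ks (\<Sum>e\<in>ks r. Const (lk r e) * mon (shn n e) :: 'k mpoly)" using assms by simp
  hence "\<mu> \<in> (\<Union>e\<in>ks r. ks (Const (lk r e) * mon (shn n e) :: 'k mpoly))"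
    by (rule subsetD[OF keys_sum])
  then obtain e where e1: "e \<in> ks r" and e2: "\<mu> \<in> ks (Const (lk r e) * mon (shn n e) :: 'k mpoly)" by blast
  have "\<mu> \<in> ks (mon (shn n e) :: 'k mpoly)" using e2 by (rule subsetD[OF keys_Const_mult])
  thus ?thesis using e1 by (auto simp: keys_mon)
qed

lemma dplus_reduced:
  fixes r :: "'k::comm_ring_1 mpoly"
  assumes q: "0 < q" and rv: "vars_in {..<n} r" and rr: "\<forall>\<mu>\<in>ks r. reduced q n \<mu>"
  shows "\<forall>\<mu>\<in>ks (delta_plus n r). reduced q (2*n) \<mu>"
proof
  fix \<mu> assume mu: "\<mu> \<in> ks (delta_plus n r)"
  have "\<mu> \<in> ks (Delta n r) \<union> ks r \<union> ks (one_tensor n r)"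
    using mu keys_diff_sub[of "Delta n r - r" "one_tensor n r"] keys_diff_sub[of "Delta n r" r]
    unfolding delta_plus_def by blast
  moreover have "reduced q (2*n) \<mu>" if "\<mu> \<in> ks r"
  proof -
    have ks: "ks \<mu> \<subseteq> {..<n}" using rv that by (auto simp: vars_in_def)
    have z: "lk \<mu> j = 0" if "n \<le> j" for j
    proof (rule ccontr)
      assume "lk \<mu> j \<noteq> 0" hence "j \<in> ks \<mu>" by (simp add: in_keys_iff)
      thus False using ks that by auto
    qed
    have rm: "reduced q n \<mu>" using rr \<open>\<mu> \<in> ks r\<close> by blast
    show ?thesis unfolding reduced_def
    proof (intro allI impI)
      fix j assume "j < 2 * n"
      show "lk \<mu> j < q"
      proof (cases "j < n")
        case True thus ?thesis using rm by (simp add: reduced_def)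
      next
        case False thus ?thesis using z[of j] q by simp
      qed
    qed
  qed
  moreover have "reduced q (2*n) \<mu>" if mu1: "\<mu> \<in> ks (one_tensor n r)"
  proof -
    obtain e where e: "e \<in> ks r" "\<mu> = shn n e" using keys_one_tensor[OF mu1] by blast
    show ?thesis unfolding reduced_def
    proof (intro allI impI)
      fix j assume j: "j < 2 * n"
      show "lk \<mu> j < q"
      proof (cases "n \<le> j")
        case True
        hence "j - n < n" using j by simp
        thus ?thesis using True e rr by (simp add: lk_shn reduced_def)
      qed (use e q in \<open>simp add: lk_shn\<close>)
    qed
  qed
  moreover have "reduced q (2*n) \<mu>" if "\<mu> \<in> ks (Delta n r)"
  proof -
    have "lk (Delta n r) \<mu> = (\<Sum>e\<in>ks r. lk r e * lk (mm (sD n) e :: 'k mpoly) \<mu>)"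
      by (simp add: Delta_ext lookup_sum lookup_Const_mult)
    moreover have "lk (Delta n r) \<mu> \<noteq> 0" using that by (simp add: in_keys_iff)
    ultimately have "(\<Sum>e\<in>ks r. lk r e * lk (mm (sD n) e :: 'k mpoly) \<mu>) \<noteq> 0" by simp
    then obtain e where e1: "e \<in> ks r" and e2: "lk r e * lk (mm (sD n) e :: 'k mpoly) \<mu> \<noteq> 0"
      by (rule sum.not_neutral_contains_not_neutral)
    have e: "e \<in> ks r" "lk (mm (sD n) e :: 'k mpoly) \<mu> \<noteq> 0" using e1 e2 by auto
    have ke: "ks e \<subseteq> {..<n}" using rv e(1) by (auto simp: vars_in_def)
    have c: "Cnd n e \<mu>" using e(2) Delta_mon_lk[OF ke, of \<mu>, where 'k='k] by (auto split: if_splits)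
    show ?thesis unfolding reduced_def
    proof (intro allI impI)
      fix j assume j: "j < 2 * n"
      show "lk \<mu> j < q"
      proof (cases "j < n")
        case True
        hence "lk \<mu> j + lk \<mu> (n + j) = lk e j" "lk e j < q" using c rr e(1) by (auto simp: Cnd_def reduced_def)
        thus ?thesis by linarith
      next
        case False
        hence jn: "j - n < n" "n + (j - n) = j" using j by auto
        have "lk \<mu> (j - n) + lk \<mu> (n + (j - n)) = lk e (j - n)" using c jn(1) by (simp add: Cnd_def)
        hence "lk \<mu> (j - n) + lk \<mu> j = lk e (j - n)" by (simp only: jn(2))
        moreover have "lk e (j - n) < q" using rr e(1) jn(1) by (simp add: reduced_def)
        ultimately show ?thesis by linarith
      qed
    qed
  qed
  ultimately show "reduced q (2*n) \<mu>" by blast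
qed

theorem lemma1:
  fixes v :: "'k::field \<Rightarrow> int"
    and p q r n :: nat
    and C :: "nat \<Rightarrow> nat \<Rightarrow> 'k"
    and a :: "'k mpoly"
  assumes dvr: "discrete_valuation v"
    and complete: "val_complete v"
    and perfect: "perfect_residue_field p v"
    and prime_p: "prime p"
    and charp: "of_nat p = (0::'k)"
    and q_def: "q = p ^ r" and r_pos: "r \<ge> 1"
    and Fq_sub: "card (Fq q :: 'k set) = q"
    and C_int: "\<forall>i<n. \<forall>j<n. C i j \<in> val_ring v"
    and Phi_iso: "Phi_K_iso n C"
    and a_vars: "vars_in {..<n} a"
    and delta_int: "\<exists>b. vars_in {..<2*n} b \<and> coeffs_in (val_ring v) b \<and>
                        delta_plus n a - b \<in> idealAA q n v C"
    and Fq_lin: "\<forall>\<alpha> \<in> Fq q. scal_act \<alpha> a - Const \<alpha> * a \<in> idealA q n v C"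
  shows "\<exists>a'. vars_in {..<n} a' \<and> coeffs_in (val_ring v) a' \<and>
              delta_plus n a - delta_plus n a' \<in> idealAA q n v C \<and>
              (\<exists>c :: nat \<Rightarrow> 'k. a - a' - elemM n 0 c \<in> idealA q n v C)"
proof -
  have q2: "2 \<le> q" using q_ge2[OF prime_p charp r_pos] q_def by simp
  have q0: "0 < q" using q2 by simp
  let ?J1 = "ideal_gen {..<n} (Gs q n C)"
  let ?J2 = "ideal_gen {..<2*n} (Gs q (2*n) (D2 n C))"
  have J1A: "x \<in> ?J1" if "x \<in> idealA q n v C" for x
    using idealA_sub[OF prime_p charp r_pos, of x n v C] that q_def by simp
  have J1A': "x \<in> idealA q n v C" if "x \<in> ?J1" for x
    using Jn_sub_idealA[OF prime_p charp r_pos dvr, of x n C] that q_def by simp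
  have AAJ2: "x \<in> ?J2" if "x \<in> idealAA q n v C" for x
    using idealAA_sub[OF prime_p charp r_pos, of x n v C] that q_def by simp
  have J12: "x \<in> ?J2" if "x \<in> ?J1" for x
    using Jn_sub_J2n[OF prime_p charp r_pos, of x n C] that q_def by simp
  have DJ: "Delta n x \<in> ?J2" if "x \<in> ?J1" for x
    using Delta_J[OF prime_p charp r_pos, of x n C] that q_def by simp
  have OJ: "one_tensor n x \<in> ?J2" if "x \<in> ?J1" for x
    using one_tensor_J[OF prime_p charp r_pos, of x n C] that q_def by simp
  have SJ: "scal_act \<alpha> x \<in> ?J1" if "\<alpha> ^ q = \<alpha>" "x \<in> ?J1" for x \<alpha>
    using scal_J[OF prime_p charp r_pos, of x n C \<alpha>] that q_def by simp
  have dpI: "delta_plus n x \<in> idealAA q n v C" if "x \<in> ?J1" for x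
    using dplus_ideal[OF prime_p charp r_pos dvr, of x n C] that q_def by simp
  have dpJ2: "delta_plus n x \<in> ?J2" if "x \<in> ?J1" for x
    unfolding delta_plus_def using that by (intro ideal_diff DJ J12 OJ)

  define r where "r = nf q n C a"
  have rv: "vars_in {..<n} r" unfolding r_def by (rule nf_vars[OF q2 a_vars]) simp
  have rr: "\<forall>\<mu>\<in>ks r. reduced q n \<mu>" unfolding r_def by (rule nf_reduced[OF q2])
  have ar: "a - r \<in> ?J1" unfolding r_def by (rule p_nf_ideal[OF q2 a_vars]) simp

  have scal: "\<alpha> ^ tdeg e * lk r e = \<alpha> * lk r e" if al: "\<alpha> ^ q = \<alpha>" for \<alpha> e
  proof -
    have "\<alpha> \<in> Fq q" by (simp add: Fq_def al)
    hence 1: "scal_act \<alpha> a - Const \<alpha> * a \<in> ?J1" using Fq_lin J1A by blast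
    have 2: "scal_act \<alpha> (a - r) \<in> ?J1" by (rule SJ[OF al ar])
    have 3: "Const \<alpha> * (a - r) \<in> ?J1" by (rule ideal_Const_mult[OF ar])
    have "scal_act \<alpha> r - Const \<alpha> * r = (scal_act \<alpha> a - Const \<alpha> * a) - scal_act \<alpha> (a - r) + Const \<alpha> * (a - r)"
      by (simp add: scal_act_def subst_diff algebra_simps)
    also have "\<dots> \<in> ?J1" by (rule ideal_add[OF ideal_diff[OF 1 2] 3])
    finally have J: "scal_act \<alpha> r - Const \<alpha> * r \<in> ?J1" .
    have k1: "\<forall>\<mu>\<in>ks (scal_act \<alpha> r). reduced q n \<mu>"
    proof
      fix \<mu> assume "\<mu> \<in> ks (scal_act \<alpha> r)"
      hence "\<mu> \<in> ks r" by (auto simp: in_keys_iff lk_scal)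
      thus "reduced q n \<mu>" using rr by blast
    qed
    have k2: "\<forall>\<mu>\<in>ks (Const \<alpha> * r). reduced q n \<mu>"
      using rr keys_Const_mult[of \<alpha> r] by blast
    have "scal_act \<alpha> r = Const \<alpha> * r" by (rule red_unique[OF q2 k1 k2 J])
    hence "lk (scal_act \<alpha> r) e = lk (Const \<alpha> * r) e" by simp
    thus ?thesis by (simp add: lk_scal lookup_Const_mult)
  qed

  obtain b where b: "vars_in {..<2*n} b" "coeffs_in (val_ring v) b" "delta_plus n a - b \<in> idealAA q n v C"
    using delta_int by blast
  have D2int: "\<forall>i<2*n. \<forall>j<2*n. D2 n C i j \<in> val_ring v"
  proof (intro allI impI)
    fix i j assume ij: "i < 2*n" "j < 2*n"
    show "D2 n C i j \<in> val_ring v"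
    proof (cases "i < n \<and> j < n")
      case True thus ?thesis using C_int by (simp add: D2_def)
    next
      case False
      show ?thesis
      proof (cases "n \<le> i \<and> n \<le> j")
        case True
        hence "i - n < n" "j - n < n" using ij by auto
        thus ?thesis using C_int True False ij by (simp add: D2_def)
      next
        case False2: False
        thus ?thesis using False by (auto simp: D2_def)
      qed
    qed
  qed
  have dr_int: "lk (delta_plus n r) \<mu> \<in> val_ring v" for \<mu>
  proof -
    have 1: "delta_plus n a - b \<in> ?J2" using AAJ2 b(3) by blast
    have 2: "delta_plus n (a - r) \<in> ?J2" using dpJ2 ar by blast
    have "delta_plus n r - b = (delta_plus n a - b) - delta_plus n (a - r)"
      by (simp add: dplus_diff)
    also have "\<dots> \<in> ?J2" using 1 2 by (rule ideal_diff)
    finally have "nf q (2*n) (D2 n C) (delta_plus n r - b) = 0" by (rule nf_kill_ideal[OF q2])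
    hence "nf q (2*n) (D2 n C) (delta_plus n r) = nf q (2*n) (D2 n C) b" by (simp add: nf_diff)
    moreover have "nf q (2*n) (D2 n C) (delta_plus n r) = delta_plus n r"
      by (rule nf_red_id[OF dplus_reduced[OF q0 rv rr]])
    moreover have "coeffs_in (val_ring v) (nf q (2*n) (D2 n C) b)"
      by (rule nf_coeffs[OF dvr D2int q2 b(2)])
    ultimately show ?thesis by (simp add: coeffs_in_iff)
  qed
  have binint: "lk r e * of_nat (lk e i choose s) \<in> val_ring v"
    if "ks e \<subseteq> {..<n}" "i < n" "0 < s" "s \<le> lk e i" "e \<noteq> sg i s" for e i s
  proof -
    have "lk (delta_plus n r) (sg i s + shn n (e - sg i s)) = lk r e * of_nat (lk e i choose s)"
      by (rule dplus_lk[OF rv that])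
    thus ?thesis using dr_int[of "sg i s + shn n (e - sg i s)"] by simp
  qed

  define c where "c i = lk r (sg i 1)" for i
  define a' where "a' = r - elemM n 0 c"
  have lk_el: "lk (elemM n 0 c) \<mu> = (\<Sum>j<n. if \<mu> = sg j 1 then c j else 0)" for \<mu>
    unfolding elemM_def lookup_sum
    by (intro sum.cong refl) (simp add: lookup_Const_mult Var_def lookup_single when_def eq_commute)
  have lka': "lk a' \<mu> = (if \<exists>j<n. \<mu> = sg j 1 then 0 else lk r \<mu>)" for \<mu>
  proof (cases "\<exists>j<n. \<mu> = sg j 1")
    case True
    then obtain j where j: "j < n" "\<mu> = sg j 1" by blast
    have "(\<Sum>j'<n. if \<mu> = sg j' 1 then c j' else 0) = (\<Sum>j'<n. if j' = j then c j' else 0)"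
    proof (intro sum.cong refl)
      fix j' assume "j' \<in> {..<n}"
      have "sg j' (1::nat) = sg j 1 \<longleftrightarrow> j' = j"
      proof
        assume "sg j' (1::nat) = sg j 1"
        hence "lk (sg j' (1::nat)) j' = lk (sg j 1) j'" by simp
        thus "j' = j" by (simp add: lk_sg split: if_splits)
      qed simp
      thus "(if \<mu> = sg j' 1 then c j' else 0) = (if j' = j then c j' else 0)" using j(2) by (auto simp: eq_commute)
    qed
    also have "\<dots> = c j" using j by simp
    finally show ?thesis using True j by (simp add: a'_def lookup_minus lk_el c_def)
  next
    case False
    hence "(\<Sum>j<n. if \<mu> = sg j 1 then c j else 0) = 0" by (intro sum.neutral) auto
    thus ?thesis using False by (auto simp: a'_def lookup_minus lk_el)
  qed
  have rint: "lk r \<mu> \<in> val_ring v" if nl: "\<not> (\<exists>j<n. \<mu> = sg j 1)" for \<mu>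
  proof (cases "\<mu> \<in> ks r")
    case False thus ?thesis by (simp add: in_keys_iff)
  next
    case True
    have ksmu: "ks \<mu> \<subseteq> {..<n}" using rv True by (auto simp: vars_in_def)
    have redmu: "reduced q n \<mu>" using rr True by blast
    show ?thesis
    proof (cases "\<mu> = 0")
      case True
      have "(0::'k) ^ q = 0" using q0 by simp
      hence "0 ^ tdeg \<mu> * lk r \<mu> = 0 * lk r \<mu>" by (rule scal)
      thus ?thesis using True by (simp add: tdeg_def)
    next
      case False
      then obtain i where i: "i \<in> ks \<mu>" by fastforce
      have iN: "i < n" using i ksmu by auto
      define t where "t = lk \<mu> i"
      have t0: "0 < t" using i by (simp add: t_def in_keys_iff)
      have tq: "t < q" using redmu iN by (simp add: reduced_def t_def)
      show ?thesis
      proof (cases "\<mu> = sg i t")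
        case False
        have "lk r \<mu> * of_nat (lk \<mu> i choose t) \<in> val_ring v"
          using False by (intro binint[OF ksmu iN t0]) (simp_all add: t_def)
        thus ?thesis by (simp add: t_def)
      next
        case mu: True
        have t1: "t \<noteq> 1" using nl mu iN by blast
        have tdeg: "tdeg \<mu> = t" using mu by simp
        show ?thesis
        proof (cases "\<exists>k. t = p ^ k")
          case True
          then obtain k where k: "t = p ^ k" by blast
          have p2: "2 \<le> p" using prime_p by (simp add: prime_ge_2_nat)
          have "k \<noteq> 0" using k t1 by auto
          hence "p ^ 1 \<le> p ^ k" using p2 by (intro power_increasing) auto
          hence d2: "2 \<le> t" using k p2 by simp
          have cardq: "card {x::'k. x ^ q = x} = q" using Fq_sub by (simp add: Fq_def)
          obtain \<alpha> :: 'k where al: "\<alpha> ^ q = \<alpha>" "\<alpha> ^ t \<noteq> \<alpha>" using fq_witness[OF cardq d2 tq] by blast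
          have "\<alpha> ^ t * lk r \<mu> = \<alpha> * lk r \<mu>" using scal[OF al(1), of \<mu>] tdeg by simp
          hence "(\<alpha> ^ t - \<alpha>) * lk r \<mu> = 0" by (simp add: algebra_simps)
          hence "lk r \<mu> = 0" using al(2) by simp
          thus ?thesis by simp
        next
          case False
          obtain s where s: "0 < s" "s < t" "(of_nat (t choose s) :: 'k) \<noteq> 0"
          proof -
            have "\<forall>k. t \<noteq> p ^ k" using False by blast
            moreover have "1 \<le> t" using t0 by simp
            ultimately show ?thesis using binom_nonzero[OF prime_p charp] that by blast
          qed
          have "lk r \<mu> * of_nat (lk \<mu> i choose s) \<in> val_ring v"
          proof (rule binint[OF ksmu iN s(1)])
            show "s \<le> lk \<mu> i" using s(2) by (simp add: t_def)
            show "\<mu> \<noteq> sg i s"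
            proof
              assume "\<mu> = sg i s"
              hence "lk \<mu> i = s" by simp
              thus False using s(2) by (simp add: t_def)
            qed
          qed
          hence "lk r \<mu> * of_nat (t choose s) \<in> val_ring v" by (simp add: t_def)
          thus ?thesis by (rule vr_cancel[OF dvr prime_p charp s(3)])
        qed
      qed
    qed
  qed
  have coeffs: "coeffs_in (val_ring v) a'"
    unfolding coeffs_in_iff
  proof
    fix \<mu> show "lk a' \<mu> \<in> val_ring v"
      using rint[of \<mu>] by (simp add: lka')
  qed
  have elv: "vars_in {..<n} (elemM n 0 c)"
    unfolding elemM_def by (intro vars_in_sum vars_in_mult vars_in_Const vars_in_Var) auto
  have vars: "vars_in {..<n} a'" unfolding a'_def by (rule vars_in_diff[OF rv elv])
  have "delta_plus n a' = delta_plus n (a - (a - r)) - delta_plus n (elemM n 0 c)"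
    unfolding a'_def by (simp add: dplus_diff[symmetric])
  also have "\<dots> = delta_plus n a - delta_plus n (a - r)" by (simp add: dplus_elemM dplus_diff)
  finally have "delta_plus n a - delta_plus n a' = delta_plus n (a - r)" by simp
  hence dp: "delta_plus n a - delta_plus n a' \<in> idealAA q n v C" using dpI[OF ar] by simp
  have "a - a' - elemM n 0 c = a - r" by (simp add: a'_def)
  hence "a - a' - elemM n 0 c \<in> idealA q n v C" using J1A'[OF ar] by (simp only:)
  thus ?thesis using vars coeffs dp by blast
qed

end
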